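(* Let $(\hat x_0,\chi,\lambda_0,\bar\varepsilon)\in \mathrm{dom}\, h\times[0,1)\times\mathbb{R}_{++}\times\mathbb{R}_{++}$ and run the method U-CS$(\hat x_0,\chi,\lambda_0,\bar\varepsilon)$ described in the context. Let $(\mu,\nu)=(\mu(\phi),\mu(h))$ and \[ Q(\bar\varepsilon)=\frac{8M_f^2}{(1-\chi)^2}+\bar\varepsilon\left(\lambda_0^{-1}+\frac{2L_f}{(1-\chi)^2}\right). \] Then U-CS terminates in at most \[ \min\left\{\min\left[\frac{1}{\chi}\left(1+\frac{Q(\bar\varepsilon)}{\mu\bar\varepsilon}\right),\ 1+\frac{Q(\bar\varepsilon)}{\nu\bar\varepsilon}\right]\log\left(1+\frac{\mu d_0^2}{\bar\varepsilon}\right),\ \frac{d_0^2Q(\bar\varepsilon)}{\bar\varepsilon^2}\right\}+\left\lceil 2\log\frac{\lambda_0 Q(\bar\varepsilon)}{\bar\varepsilon}\right\rceil \] iterations.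
   Context: Setting: $f,h:\mathbb{R}^n\to\mathbb{R}\cup\{+\infty\}$ are proper lower semicontinuous convex functions with $\mathrm{dom}\, h\subseteq\mathrm{dom}\, f$, $\phi=f+h$, $\phi_*=\inf_x\phi(x)$. A subgradient oracle $f':\mathrm{dom}\, h\to\mathbb{R}^n$ with $f'(x)\in\partial f(x)$ is available, and there are $M_f,L_f\ge0$ with $\|f'(x)-f'(y)\|\le 2M_f+L_f\|x-y\|$ for all $x,y\in\mathrm{dom}\, h$. The set $X_*$ of minimizers of $\phi$ is nonempty. For $x\in\mathrm{dom}\, h$, $\ell_f(u;x):=f(x)+\langle f'(x),u-x\rangle$. For a proper convex function $\psi$, $\mu(\psi)$ denotes the largest $\mu\ge0$ such that $\psi-\frac{\mu}{2}\|\cdot\|^2$ is convex. $d_0:=\min\{\|x-\hat x_0\|:x\in X_*\}$; $\log$ is the natural logarithm. Method U-CS$(\hat x_0,\chi,\lambda_0,\bar\varepsilon)$: Step 0: set $\lambda=\lambda_0$, $k=1$. Step 1: compute $x=\mathrm{argmin}_{u\in\mathbb{R}^n}\{\ell_f(u;\hat x_{k-1})+h(u)+\frac{1}{2\lambda}\|u-\hat x_{k-1}\|^2\}$; if $\phi(x)-\phi_*\le\bar\varepsilon$, stop. Step 2: if $f(x)-\ell_f(x;\hat x_{k-1})-(1-\chi)\|x-\hat x_{k-1}\|^2/(2\lambda)\le(1-\chi)\bar\varepsilon/2$ does not hold, set $\lambda=\lambda/2$ and go to Step 1; else set $\lambda_k=\lambda$, $\hat x_k=x$, $k\leftarrow k+1$,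 and go to Step 1. Conventions: $1/0=+\infty$; when $\mu=0$ the first entry of the outer minimum is interpreted as $+\infty$ (so the first term of the bound equals $d_0^2Q(\bar\varepsilon)/\bar\varepsilon^2$). *)

theory Defs
  imports "HOL-Analysis.Analysis"
begin

definition edom :: "('a \<Rightarrow> ereal) \<Rightarrow> 'a set" where
  "edom \<psi> = {x. \<psi> x < \<infinity>}"

definition proper_fun :: "('a \<Rightarrow> ereal) \<Rightarrow> bool" where
  "proper_fun \<psi> \<longleftrightarrow> (\<forall>x. \<psi> x \<noteq> -\<infinity>) \<and> (\<exists>x. \<psi> x < \<infinity>)"

definition convex_fun :: "('a::real_vector \<Rightarrow> ereal) \<Rightarrow> bool" where
  "convex_fun \<psi> \<longleftrightarrow> convex {(x, t::real). \<psi> x \<le> ereal t}"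

definition lsc_fun :: "('a::topological_space \<Rightarrow> ereal) \<Rightarrow> bool" where
  "lsc_fun \<psi> \<longleftrightarrow> (\<forall>x. \<psi> x \<le> Liminf (at x) \<psi>)"

definition subdiff :: "('a::real_inner \<Rightarrow> ereal) \<Rightarrow> 'a \<Rightarrow> 'a set" where
  "subdiff \<psi> x = {g. \<forall>y. \<psi> y \<ge> \<psi> x + ereal (inner g (y - x))}"

text \<open>Modulus of strong convexity mu(psi): the largest mu \<ge> 0 such that
  psi - (mu/2)||.||^2 is convex (taken in the extended reals, i.e. as a supremum;
  the supremum is attained whenever it is finite).\<close>
definition sc_modulus :: "('a::real_normed_vector \<Rightarrow> ereal) \<Rightarrow> ereal" where
  "sc_modulus \<psi> = Sup {ereal m | m. m \<ge> 0 \<and> convex_fun (\<lambda>x. \<psi> x - ereal (m / 2 * (norm x)\<^sup>2))}"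

definition lin_f :: "('a::real_inner \<Rightarrow> ereal) \<Rightarrow> ('a \<Rightarrow> 'a) \<Rightarrow> 'a \<Rightarrow> 'a \<Rightarrow> ereal" where
  "lin_f f f' u x = f x + ereal (inner (f' x) (u - x))"

text \<open>Step 1 subproblem solution (the minimiser is unique by strong convexity).\<close>
definition ucs_prox :: "('a::real_inner \<Rightarrow> ereal) \<Rightarrow> ('a \<Rightarrow> 'a) \<Rightarrow> ('a \<Rightarrow> ereal) \<Rightarrow> 'a \<Rightarrow> real \<Rightarrow> 'a" where
  "ucs_prox f f' h xh lam =
     (SOME x. \<forall>u. lin_f f f' x xh + h x + ereal ((norm (x - xh))\<^sup>2 / (2 * lam))
               \<le> lin_f f f' u xh + h u + ereal ((norm (u - xh))\<^sup>2 / (2 * lam)))"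

definition ucs_accept :: "('a::real_inner \<Rightarrow> ereal) \<Rightarrow> ('a \<Rightarrow> 'a) \<Rightarrow> real \<Rightarrow> real \<Rightarrow> 'a \<Rightarrow> 'a \<Rightarrow> real \<Rightarrow> bool" where
  "ucs_accept f f' chi eps x xh lam \<longleftrightarrow>
     f x - lin_f f f' x xh - ereal ((1 - chi) * (norm (x - xh))\<^sup>2 / (2 * lam))
       \<le> ereal ((1 - chi) * eps / 2)"

text \<open>State (current prox center, current stepsize) at the start of the j-th execution of
  Step 1 (j = 0, 1, 2, ...), assuming no stop occurred before.\<close>
primrec ucs_state :: "('a::real_inner \<Rightarrow> ereal) \<Rightarrow> ('a \<Rightarrow> 'a) \<Rightarrow> ('a \<Rightarrow> ereal) \<Rightarrow> real \<Rightarrow> real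
    \<Rightarrow> 'a \<Rightarrow> real \<Rightarrow> nat \<Rightarrow> 'a \<times> real" where
  "ucs_state f f' h chi eps x0 lam0 0 = (x0, lam0)"
| "ucs_state f f' h chi eps x0 lam0 (Suc j) =
     (let (xh, lam) = ucs_state f f' h chi eps x0 lam0 j;
          x = ucs_prox f f' h xh lam
      in if ucs_accept f f' chi eps x xh lam then (x, lam) else (xh, lam / 2))"

definition ucs_stops_at :: "('a::real_inner \<Rightarrow> ereal) \<Rightarrow> ('a \<Rightarrow> 'a) \<Rightarrow> ('a \<Rightarrow> ereal) \<Rightarrow> real \<Rightarrow> real
    \<Rightarrow> 'a \<Rightarrow> real \<Rightarrow> nat \<Rightarrow> bool" where
  "ucs_stops_at f f' h chi eps x0 lam0 j \<longleftrightarrow>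
     (let (xh, lam) = ucs_state f f' h chi eps x0 lam0 j;
          x = ucs_prox f f' h xh lam
      in f x + h x - (INF y. f y + h y) \<le> ereal eps)"

definition eln :: "ereal \<Rightarrow> ereal" where
  "eln z = (if z = \<infinity> then \<infinity> else ereal (ln (real_of_ereal z)))"

text \<open>The iteration bound of the theorem, in the extended reals (1/0 = +\<infinity>).\<close>
definition ucs_bound :: "real \<Rightarrow> real \<Rightarrow> real \<Rightarrow> real \<Rightarrow> real \<Rightarrow> ereal \<Rightarrow> ereal \<Rightarrow> real \<Rightarrow> ereal" where
  "ucs_bound Mf Lf chi lam0 eps \<mu> \<nu> d0 =
     (let Q = 8 * Mf\<^sup>2 / (1 - chi)\<^sup>2 + eps * (1 / lam0 + 2 * Lf / (1 - chi)\<^sup>2);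
          A1 = (if chi = 0 then \<infinity> else ereal (1 / chi)) * (1 + ereal Q / (\<mu> * ereal eps));
          A2 = 1 + ereal Q / (\<nu> * ereal eps);
          T1 = (if \<mu> = 0 then \<infinity> else min A1 A2 * eln (1 + \<mu> * ereal (d0\<^sup>2 / eps)))
      in min T1 (ereal (d0\<^sup>2 * Q / eps\<^sup>2)) + ereal (of_int \<lceil>2 * ln (lam0 * Q / eps)\<rceil>))"

end

theory Submission
  imports Defs
begin

lemma norm_comb:
  fixes x y :: "'a::real_inner"
  shows "(norm ((1-t)*\<^sub>R x + t*\<^sub>R y))\<^sup>2 = (1-t)*(norm x)\<^sup>2 + t*(norm y)\<^sup>2 - t*(1-t)*(norm(x-y))\<^sup>2"
  unfolding power2_norm_eq_inner
  by (simp add: inner_add inner_diff inner_scaleR inner_commute algebra_simps power2_eq_square)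

lemma convex_fun_ineq:
  assumes "convex_fun \<psi>" "\<psi> x = ereal a" "\<psi> y = ereal b" "0 \<le> t" "t \<le> 1"
  shows "\<psi> ((1-t)*\<^sub>R x + t*\<^sub>R y) \<le> ereal ((1-t)*a + t*b)"
proof -
  let ?E = "{(x, t::real). \<psi> x \<le> ereal t}"
  have "(x,a) \<in> ?E" "(y,b) \<in> ?E" using assms by auto
  from convexD[OF assms(1)[unfolded convex_fun_def] this, of "1-t" t]
  show ?thesis using assms by simp
qed

lemma convex_funI':
  assumes ninf: "\<And>x. \<psi> x \<noteq> -\<infinity>"
    and ineq: "\<And>x y a b t. \<psi> x = ereal a \<Longrightarrow> \<psi> y = ereal b \<Longrightarrow> 0 \<le> t \<Longrightarrow> t \<le> 1 \<Longrightarrow>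
       \<psi> ((1-t)*\<^sub>R x + t*\<^sub>R y) \<le> ereal ((1-t)*a + t*b)"
  shows "convex_fun \<psi>"
  unfolding convex_fun_def
proof (rule convexI)
  fix p q :: "'a \<times> real" and u w :: real
  assume p: "p \<in> {(x, t). \<psi> x \<le> ereal t}" and q: "q \<in> {(x, t). \<psi> x \<le> ereal t}"
    and uv: "0 \<le> u" "0 \<le> w" "u + w = 1"
  obtain x s where ps: "p = (x,s)" by (cases p)
  obtain y r where qs: "q = (y,r)" by (cases q)
  have hx: "\<psi> x \<le> ereal s" using p ps by simp
  have hy: "\<psi> y \<le> ereal r" using q qs by simp
  obtain a where a: "\<psi> x = ereal a" using hx ninf[of x] by (cases "\<psi> x") auto
  obtain b where b: "\<psi> y = ereal b" using hy ninf[of y] by (cases "\<psi> y") auto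
  have u: "u = 1 - w" using uv by simp
  have "\<psi> ((1-w) *\<^sub>R x + w *\<^sub>R y) \<le> ereal ((1-w)*a + w*b)"
    using ineq[OF a b] uv by simp
  also have "(1-w)*a + w*b \<le> (1-w) * s + w * r"
    using hx hy a b uv by (intro add_mono mult_left_mono) auto
  finally show "u *\<^sub>R p + w *\<^sub>R q \<in> {(x, t). \<psi> x \<le> ereal t}"
    using ps qs u by simp
qed

definition sc_ineq :: "('a::real_normed_vector \<Rightarrow> ereal) \<Rightarrow> real \<Rightarrow> bool" where
  "sc_ineq \<psi> m \<longleftrightarrow> (\<forall>x y a b t. \<psi> x = ereal a \<longrightarrow> \<psi> y = ereal b \<longrightarrow> 0 \<le> t \<longrightarrow> t \<le> 1 \<longrightarrow>
     \<psi> ((1-t)*\<^sub>R x + t*\<^sub>R y) \<le> ereal ((1-t)*a + t*b - m/2*t*(1-t)*(norm(x-y))\<^sup>2))"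

lemma sc_of_convex:
  fixes \<psi> :: "'a::real_inner \<Rightarrow> ereal"
  assumes ninf: "\<And>x. \<psi> x \<noteq> -\<infinity>"
    and cv: "convex_fun (\<lambda>x. \<psi> x - ereal (m/2*(norm x)\<^sup>2))"
  shows "sc_ineq \<psi> m"
  unfolding sc_ineq_def
proof (intro allI impI)
  fix x y a b and t :: real assume a: "\<psi> x = ereal a" and b: "\<psi> y = ereal b" and t: "0 \<le> t" "t \<le> 1"
  let ?z = "(1-t)*\<^sub>R x + t*\<^sub>R y"
  have "(\<lambda>x. \<psi> x - ereal (m/2*(norm x)\<^sup>2)) ?z \<le> ereal ((1-t)*(a - m/2*(norm x)\<^sup>2) + t*(b - m/2*(norm y)\<^sup>2))"
    by (rule convex_fun_ineq[OF cv]) (use a b t in auto)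
  then have le: "\<psi> ?z - ereal (m/2*(norm ?z)\<^sup>2) \<le> ereal ((1-t)*(a - m/2*(norm x)\<^sup>2) + t*(b - m/2*(norm y)\<^sup>2))"
    by simp
  obtain c where c: "\<psi> ?z = ereal c" using le ninf[of ?z] by (cases "\<psi> ?z") auto
  have "c - m/2*(norm ?z)\<^sup>2 \<le> (1-t)*(a - m/2*(norm x)\<^sup>2) + t*(b - m/2*(norm y)\<^sup>2)"
    using le c by (simp del: scaleR_diff_left)
  moreover have "m/2*(norm ?z)\<^sup>2 = (1-t)*(m/2*(norm x)\<^sup>2) + t*(m/2*(norm y)\<^sup>2) - m/2*t*(1-t)*(norm(x-y))\<^sup>2"
    unfolding norm_comb by (simp add: field_simps)
  moreover have "(1-t)*(a - m/2*(norm x)\<^sup>2) + t*(b - m/2*(norm y)\<^sup>2) = (1-t)*a + t*b - ((1-t)*(m/2*(norm x)\<^sup>2) + t*(m/2*(norm y)\<^sup>2))"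
    by (simp add: algebra_simps)
  ultimately have "c \<le> (1-t)*a + t*b - m/2*t*(1-t)*(norm(x-y))\<^sup>2"
    by linarith
  then show "\<psi> ?z \<le> ereal ((1-t)*a + t*b - m/2*t*(1-t)*(norm(x-y))\<^sup>2)" using c by simp
qed

lemma convex_of_sc:
  fixes \<psi> :: "'a::real_inner \<Rightarrow> ereal"
  assumes ninf: "\<And>x. \<psi> x \<noteq> -\<infinity>" and sc: "sc_ineq \<psi> m"
  shows "convex_fun (\<lambda>x. \<psi> x - ereal (m/2*(norm x)\<^sup>2))"
proof (rule convex_funI')
  fix x show "\<psi> x - ereal (m / 2 * (norm x)\<^sup>2) \<noteq> - \<infinity>" using ninf[of x] by (cases "\<psi> x") auto
next
  fix x y a b and t :: real
  assume a: "\<psi> x - ereal (m / 2 * (norm x)\<^sup>2) = ereal a" and b: "\<psi> y - ereal (m / 2 * (norm y)\<^sup>2) = ereal b"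
    and t: "0 \<le> t" "t \<le> 1"
  let ?z = "(1-t)*\<^sub>R x + t*\<^sub>R y"
  obtain a' where a': "\<psi> x = ereal a'" using a ninf[of x] by (cases "\<psi> x") auto
  obtain b' where b': "\<psi> y = ereal b'" using b ninf[of y] by (cases "\<psi> y") auto
  have aa: "a = a' - m/2*(norm x)\<^sup>2" using a a' by simp
  have bb: "b = b' - m/2*(norm y)\<^sup>2" using b b' by simp
  have le: "\<psi> ?z \<le> ereal ((1-t)*a' + t*b' - m/2*t*(1-t)*(norm(x-y))\<^sup>2)"
    using sc a' b' t unfolding sc_ineq_def by blast
  obtain c where c: "\<psi> ?z = ereal c" using le ninf[of ?z] by (cases "\<psi> ?z") auto
  have "c \<le> (1-t)*a' + t*b' - m/2*t*(1-t)*(norm(x-y))\<^sup>2"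
    using le c by (simp del: scaleR_diff_left)
  moreover have "m/2*(norm ?z)\<^sup>2 = (1-t)*(m/2*(norm x)\<^sup>2) + t*(m/2*(norm y)\<^sup>2) - m/2*t*(1-t)*(norm(x-y))\<^sup>2"
    unfolding norm_comb by (simp add: field_simps)
  moreover have "(1-t)*a + t*b = (1-t)*a' + t*b' - ((1-t)*(m/2*(norm x)\<^sup>2) + t*(m/2*(norm y)\<^sup>2))"
    unfolding aa bb by (simp add: algebra_simps)
  ultimately have "c - m/2*(norm ?z)\<^sup>2 \<le> (1-t)*a + t*b"
    by linarith
  then show "\<psi> ?z - ereal (m / 2 * (norm ?z)\<^sup>2) \<le> ereal ((1 - t) * a + t * b)"
    using c by simp
qed

lemma sc_mono:
  assumes "sc_ineq \<psi> m" "m' \<le> m"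
  shows "sc_ineq \<psi> m'"
  unfolding sc_ineq_def
proof (intro allI impI)
  fix x y a b and t :: real assume a: "\<psi> x = ereal a" and b: "\<psi> y = ereal b" and t: "0 \<le> t" "t \<le> 1"
  have "\<psi> ((1-t)*\<^sub>R x + t*\<^sub>R y) \<le> ereal ((1-t)*a + t*b - m/2*t*(1-t)*(norm(x-y))\<^sup>2)"
    using assms(1) a b t unfolding sc_ineq_def by blast
  also have "\<dots> \<le> ereal ((1-t)*a + t*b - m'/2*t*(1-t)*(norm(x-y))\<^sup>2)"
  proof -
    have "0 \<le> t*(1-t)*(norm(x-y))\<^sup>2" using t by simp
    then have "m'*(t*(1-t)*(norm(x-y))\<^sup>2) \<le> m*(t*(1-t)*(norm(x-y))\<^sup>2)"
      using assms(2) by (intro mult_right_mono)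
    moreover have "m/2*t*(1-t)*(norm(x-y))\<^sup>2 = m*(t*(1-t)*(norm(x-y))\<^sup>2)/2" by simp
    moreover have "m'/2*t*(1-t)*(norm(x-y))\<^sup>2 = m'*(t*(1-t)*(norm(x-y))\<^sup>2)/2" by simp
    ultimately show ?thesis by simp
  qed
  finally show "\<psi> ((1-t)*\<^sub>R x + t*\<^sub>R y) \<le> ereal ((1-t)*a + t*b - m'/2*t*(1-t)*(norm(x-y))\<^sup>2)" .
qed

lemma convex_sc0:
  fixes \<psi> :: "'a::real_inner \<Rightarrow> ereal"
  assumes "\<And>x. \<psi> x \<noteq> -\<infinity>" "convex_fun \<psi>"
  shows "sc_ineq \<psi> 0"
  using sc_of_convex[of \<psi> 0] assms by (simp add: zero_ereal_def[symmetric])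

lemma sc_add:
  assumes f: "sc_ineq f 0" and h: "sc_ineq h m"
    and fn: "\<And>x. f x \<noteq> -\<infinity>" and hn: "\<And>x. h x \<noteq> -\<infinity>"
  shows "sc_ineq (\<lambda>x. f x + h x) m"
  unfolding sc_ineq_def
proof (intro allI impI)
  fix x y a b and t :: real assume a: "f x + h x = ereal a" and b: "f y + h y = ereal b" and t: "0 \<le> t" "t \<le> 1"
  obtain a1 a2 where a12: "f x = ereal a1" "h x = ereal a2" using a fn[of x] hn[of x]
    by (cases "f x"; cases "h x") auto
  obtain b1 b2 where b12: "f y = ereal b1" "h y = ereal b2" using b fn[of y] hn[of y]
    by (cases "f y"; cases "h y") auto
  have 1: "f ((1-t)*\<^sub>R x + t*\<^sub>R y) \<le> ereal ((1-t)*a1 + t*b1)"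
    using f a12 b12 t unfolding sc_ineq_def by (metis (no_types, lifting) diff_zero div_0 mult_zero_left)
  have 2: "h ((1-t)*\<^sub>R x + t*\<^sub>R y) \<le> ereal ((1-t)*a2 + t*b2 - m/2*t*(1-t)*(norm(x-y))\<^sup>2)"
    using h a12 b12 t unfolding sc_ineq_def by blast
  have "f ((1-t)*\<^sub>R x + t*\<^sub>R y) + h ((1-t)*\<^sub>R x + t*\<^sub>R y) \<le>
     ereal ((1-t)*a1 + t*b1) + ereal ((1-t)*a2 + t*b2 - m/2*t*(1-t)*(norm(x-y))\<^sup>2)"
    using 1 2 by (rule add_mono)
  also have "\<dots> = ereal ((1-t)*a + t*b - m/2*t*(1-t)*(norm(x-y))\<^sup>2)"
  proof -
    have "a = a1 + a2" "b = b1 + b2" using a b a12 b12 by auto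
    then show ?thesis by (simp add: algebra_simps)
  qed
  finally show "f ((1-t)*\<^sub>R x + t*\<^sub>R y) + h ((1-t)*\<^sub>R x + t*\<^sub>R y) \<le> ereal ((1-t)*a + t*b - m/2*t*(1-t)*(norm(x-y))\<^sup>2)" .
qed


lemma scD:
  assumes "sc_ineq \<psi> m" "\<psi> x = ereal a" "\<psi> y = ereal b" "0 \<le> t" "t \<le> 1"
  shows "\<psi> ((1-t)*\<^sub>R x + t*\<^sub>R y) \<le> ereal ((1-t)*a + t*b - m/2*t*(1-t)*(norm(x-y))\<^sup>2)"
  using assms unfolding sc_ineq_def by blast

definition lscp :: "('a::metric_space \<Rightarrow> ereal) \<Rightarrow> bool" where
  "lscp \<psi> \<longleftrightarrow> (\<forall>x y. ereal y < \<psi> x \<longrightarrow> (\<exists>d>0. \<forall>z. dist z x < d \<longrightarrow> ereal y < \<psi> z))"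

lemma lsc_lscp:
  fixes \<psi> :: "'a::metric_space \<Rightarrow> ereal"
  assumes "lsc_fun \<psi>" shows "lscp \<psi>"
  unfolding lscp_def
proof (intro allI impI)
  fix x y assume xy: "ereal y < \<psi> x"
  then have "ereal y < Liminf (at x) \<psi>" using assms unfolding lsc_fun_def
    using order_less_le_trans by blast
  then have "eventually (\<lambda>z. \<psi> z > ereal y) (at x)" by (rule less_LiminfD)
  then obtain d where d: "d > 0" "\<And>z. z \<noteq> x \<Longrightarrow> dist z x < d \<Longrightarrow> \<psi> z > ereal y"
    unfolding eventually_at by auto
  show "\<exists>d>0. \<forall>z. dist z x < d \<longrightarrow> ereal y < \<psi> z"
  proof (intro exI[of _ d] conjI allI impI)
    fix z assume "dist z x < d"
    then show "ereal y < \<psi> z" using d xy by (cases "z = x") auto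
  qed (use d in auto)
qed

lemma ereal_add_strict_mono2:
  assumes "ereal a < p" "ereal b < q" shows "ereal (a+b) < p + q"
  using assms by (cases p; cases q) auto

lemma lscp_add:
  fixes f h :: "'a::metric_space \<Rightarrow> ereal"
  assumes f: "lscp f" and h: "lscp h" and fn: "\<And>x. f x \<noteq> -\<infinity>" and hn: "\<And>x. h x \<noteq> -\<infinity>"
  shows "lscp (\<lambda>x. f x + h x)"
  unfolding lscp_def
proof (intro allI impI)
  fix x y assume xy: "ereal y < f x + h x"
  obtain a b where ab: "ereal a < f x" "ereal b < h x" "y \<le> a + b"
  proof -
    show thesis
    proof (cases "f x = \<infinity>")
      case fI: True
      show thesis
      proof (cases "h x = \<infinity>")
        case True then show thesis using fI by (intro that[of 0 y]) auto
      next
        case False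
        then obtain q where q: "h x = ereal q" using hn[of x] by (cases "h x") auto
        show thesis using fI q by (intro that[of "y - (q - 1)" "q - 1"]) auto
      qed
    next
      case False
      then obtain p where p: "f x = ereal p" using fn[of x] by (cases "f x") auto
      show thesis
      proof (cases "h x = \<infinity>")
        case True then show thesis using p by (intro that[of "p - 1" "y - (p - 1)"]) auto
      next
        case False
        then obtain q where q: "h x = ereal q" using hn[of x] by (cases "h x") auto
        then have "y < p + q" using xy p by simp
        then show thesis using p q by (intro that[of "p - (p+q-y)/2" "q - (p+q-y)/2"]) auto
      qed
    qed
  qed
  obtain d1 where d1: "d1 > 0" "\<And>z. dist z x < d1 \<Longrightarrow> ereal a < f z" using f ab(1) unfolding lscp_def by blast
  obtain d2 where d2: "d2 > 0" "\<And>z. dist z x < d2 \<Longrightarrow> ereal b < h z" using h ab(2) unfolding lscp_def by blast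
  show "\<exists>d>0. \<forall>z. dist z x < d \<longrightarrow> ereal y < f z + h z"
  proof (intro exI[of _ "min d1 d2"] conjI allI impI)
    fix z assume "dist z x < min d1 d2"
    then have "ereal (a+b) < f z + h z" using d1 d2 by (intro ereal_add_strict_mono2) auto
    then show "ereal y < f z + h z" using ab(3) by (meson ereal_less_eq(3) order_le_less_trans)
  qed (use d1 d2 in auto)
qed

lemma lscp_closed_sub:
  fixes \<psi> :: "'a::metric_space \<Rightarrow> ereal"
  assumes "lscp \<psi>" shows "closed {x. \<psi> x \<le> ereal c}"
  unfolding closed_def open_dist
proof
  fix x assume "x \<in> - {x. \<psi> x \<le> ereal c}"
  then have "ereal c < \<psi> x" by auto
  then obtain d where "d > 0" "\<And>z. dist z x < d \<Longrightarrow> ereal c < \<psi> z" using assms unfolding lscp_def by blast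
  then show "\<exists>e>0. \<forall>y. dist y x < e \<longrightarrow> y \<in> - {x. \<psi> x \<le> ereal c}" by (meson ComplI mem_Collect_eq not_le)
qed

lemma lscp_closed_epi:
  fixes \<psi> :: "'a::metric_space \<Rightarrow> ereal"
  assumes "lscp \<psi>" shows "closed {(x, t::real). \<psi> x \<le> ereal t}"
  unfolding closed_def
proof (subst open_subopen, intro ballI)
  fix p assume "p \<in> - {(x, t::real). \<psi> x \<le> ereal t}"
  then obtain x t where p: "p = (x,t)" and lt: "ereal t < \<psi> x" by (cases p) auto
  obtain yy where yy: "ereal t < ereal yy" "ereal yy < \<psi> x" using ereal_dense2[OF lt] by blast
  obtain d where d: "d > 0" "\<And>z. dist z x < d \<Longrightarrow> ereal yy < \<psi> z" using assms yy(2) unfolding lscp_def by blast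
  show "\<exists>T. open T \<and> p \<in> T \<and> T \<subseteq> - {(x, t). \<psi> x \<le> ereal t}"
  proof (intro exI[of _ "ball x d \<times> {..<yy}"] conjI)
    show "open (ball x d \<times> {..<yy})" by (intro open_Times) auto
    show "p \<in> ball x d \<times> {..<yy}" using p d yy by auto
    show "ball x d \<times> {..<yy} \<subseteq> - {(x, t). \<psi> x \<le> ereal t}"
    proof
      fix q assume "q \<in> ball x d \<times> {..<yy}"
      then obtain z s where q: "q = (z,s)" "dist z x < d" "s < yy" by (cases q) (auto simp: dist_commute)
      have "ereal s < ereal yy" using q by simp
      then have "ereal s < \<psi> z" using d(2)[OF q(2)] by (rule order.strict_trans)
      then show "q \<in> - {(x, t). \<psi> x \<le> ereal t}" using q by auto
    qed
  qed
qed

lemma scmod_attain: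
  fixes \<psi> :: "'a::real_inner \<Rightarrow> ereal"
  assumes ninf: "\<And>x. \<psi> x \<noteq> -\<infinity>" and mu: "sc_modulus \<psi> = ereal \<mu>"
  shows "sc_ineq \<psi> \<mu>"
proof -
  have low: "sc_ineq \<psi> m'" if "m' < \<mu>" for m'
  proof -
    have "ereal m' < sc_modulus \<psi>" using mu that by simp
    then obtain s where s: "s \<in> {ereal m | m. m \<ge> 0 \<and> convex_fun (\<lambda>x. \<psi> x - ereal (m / 2 * (norm x)\<^sup>2))}"
      "ereal m' < s" unfolding sc_modulus_def less_Sup_iff by blast
    then obtain m where m: "s = ereal m" "convex_fun (\<lambda>x. \<psi> x - ereal (m / 2 * (norm x)\<^sup>2))" by blast
    have "sc_ineq \<psi> m" by (rule sc_of_convex[OF ninf m(2)])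
    then show ?thesis by (rule sc_mono) (use s m in auto)
  qed
  show ?thesis unfolding sc_ineq_def
  proof (intro allI impI)
    fix x y a b and t :: real assume a: "\<psi> x = ereal a" and b: "\<psi> y = ereal b" and t: "0 \<le> t" "t \<le> 1"
    define B where "B = t*(1-t)*(norm(x-y))\<^sup>2/2"
    have B0: "B \<ge> 0" using t unfolding B_def by simp
    have eqB: "m/2*t*(1-t)*(norm(x-y))\<^sup>2 = m * B" for m unfolding B_def by simp
    have L: "\<psi> ((1-t)*\<^sub>R x + t*\<^sub>R y) \<le> ereal ((1-t)*a + t*b - m' * B)" if "m' < \<mu>" for m'
      using scD[OF low[OF that] a b t] unfolding eqB .
    obtain c where c: "\<psi> ((1-t)*\<^sub>R x + t*\<^sub>R y) = ereal c"
      using L[of "\<mu> - 1"] ninf[of "(1-t)*\<^sub>R x + t*\<^sub>R y"] by (cases "\<psi> ((1-t)*\<^sub>R x + t*\<^sub>R y)") auto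
    have Lc: "c \<le> (1-t)*a + t*b - m' * B" if "m' < \<mu>" for m' using L[OF that] c by simp
    have "c \<le> (1-t)*a + t*b - \<mu> * B"
    proof (cases "B = 0")
      case True then show ?thesis using Lc[of "\<mu> - 1"] by simp
    next
      case False
      then have Bp: "B > 0" using B0 by simp
      have "\<mu> \<le> ((1-t)*a + t*b - c) / B"
      proof (rule dense_le)
        fix m' assume "m' < \<mu>"
        then have "m' * B \<le> (1-t)*a + t*b - c" using Lc by force
        then show "m' \<le> ((1-t)*a + t*b - c) / B" using Bp by (simp add: field_simps)
      qed
      then show ?thesis using Bp by (simp add: field_simps)
    qed
    then show "\<psi> ((1-t)*\<^sub>R x + t*\<^sub>R y) \<le> ereal ((1-t)*a + t*b - \<mu>/2*t*(1-t)*(norm(x-y))\<^sup>2)"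
      unfolding eqB using c by simp
  qed
qed

lemma scmod_ge0:
  fixes \<psi> :: "'a::real_normed_vector \<Rightarrow> ereal"
  assumes "convex_fun \<psi>" shows "0 \<le> sc_modulus \<psi>"
proof -
  have "ereal 0 \<in> {ereal m | m. m \<ge> 0 \<and> convex_fun (\<lambda>x. \<psi> x - ereal (m / 2 * (norm x)\<^sup>2))}"
    using assms by (intro CollectI exI[of _ 0]) (simp add: zero_ereal_def[symmetric])
  then show ?thesis unfolding sc_modulus_def zero_ereal_def by (rule Sup_upper)
qed

lemma scmod_mono:
  fixes f h :: "'a::real_inner \<Rightarrow> ereal"
  assumes fc: "convex_fun f" and fn: "\<And>x. f x \<noteq> -\<infinity>" and hn: "\<And>x. h x \<noteq> -\<infinity>"
  shows "sc_modulus h \<le> sc_modulus (\<lambda>x. f x + h x)"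
  unfolding sc_modulus_def
proof (rule Sup_subset_mono, safe)
  fix m :: real assume m: "0 \<le> m" "convex_fun (\<lambda>x. h x - ereal (m / 2 * (norm x)\<^sup>2))"
  have "sc_ineq (\<lambda>x. f x + h x) m"
    by (rule sc_add[OF convex_sc0[OF fn fc] sc_of_convex[OF hn m(2)] fn hn])
  moreover have "f x + h x \<noteq> -\<infinity>" for x using fn[of x] hn[of x] by (cases "f x"; cases "h x") auto
  ultimately have "convex_fun (\<lambda>x. (f x + h x) - ereal (m / 2 * (norm x)\<^sup>2))"
    by (intro convex_of_sc) auto
  then show "\<exists>ma. ereal m = ereal ma \<and> 0 \<le> ma \<and> convex_fun (\<lambda>x. f x + h x - ereal (ma / 2 * (norm x)\<^sup>2))"
    using m by blast
qed

lemma scmod_inf_single: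
  fixes \<psi> :: "'a::real_inner \<Rightarrow> ereal"
  assumes ninf: "\<And>x. \<psi> x \<noteq> -\<infinity>" and cv: "convex_fun \<psi>" and inf: "sc_modulus \<psi> = \<infinity>"
    and a: "\<psi> x = ereal a" and b: "\<psi> y = ereal b"
  shows "x = y"
proof (rule ccontr)
  assume ne: "x \<noteq> y"
  define N where "N = (norm (x-y))\<^sup>2"
  have N: "N > 0" using ne unfolding N_def by simp
  let ?z = "(1-1/2)*\<^sub>R x + (1/2::real)*\<^sub>R y"
  have "\<psi> ?z \<le> ereal ((1-1/2)*a + (1/2)*b - 0/2*(1/2)*(1-1/2)*(norm(x-y))\<^sup>2)"
    using scD[OF convex_sc0[OF ninf cv] a b, of "1/2"] by simp
  then obtain c where c: "\<psi> ?z = ereal c" using ninf[of ?z] by (cases "\<psi> ?z") auto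
  define M where "M = 8*((a+b)/2 - c)/N + 1"
  have "ereal M < sc_modulus \<psi>" using inf by simp
  then obtain s where s: "s \<in> {ereal m | m. m \<ge> 0 \<and> convex_fun (\<lambda>x. \<psi> x - ereal (m / 2 * (norm x)\<^sup>2))}"
      "ereal M < s" unfolding sc_modulus_def less_Sup_iff by blast
  then obtain m where m: "s = ereal m" "convex_fun (\<lambda>x. \<psi> x - ereal (m / 2 * (norm x)\<^sup>2))" "M < m" by auto
  have "\<psi> ?z \<le> ereal ((1-1/2)*a + (1/2)*b - m/2*(1/2)*(1-1/2)*(norm(x-y))\<^sup>2)"
    using scD[OF sc_of_convex[OF ninf m(2)] a b, of "1/2"] by simp
  then have "c \<le> (a+b)/2 - m*N/8" using c unfolding N_def by (simp add: field_simps)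
  moreover have "m * N > M * N" using m(3) N by simp
  moreover have "M * N = 8*((a+b)/2 - c) + N" unfolding M_def using N by (simp add: field_simps)
  ultimately show False using N by (simp add: field_simps)
qed


lemma affine_minorant:
  fixes h :: "'a::euclidean_space \<Rightarrow> ereal"
  assumes hp: "proper_fun h" and hc: "convex_fun h" and hl: "lsc_fun h"
  shows "\<exists>a c. \<forall>u. ereal (inner a u + c) \<le> h u"
proof -
  have ninf: "h x \<noteq> -\<infinity>" for x using hp unfolding proper_fun_def by auto
  obtain x1 where "h x1 < \<infinity>" using hp unfolding proper_fun_def by auto
  then obtain v where v: "h x1 = ereal v" using ninf[of x1] by (cases "h x1") auto
  define E where "E = {(x, t::real). h x \<le> ereal t}"
  have cE: "closed E" unfolding E_def by (rule lscp_closed_epi[OF lsc_lscp[OF hl]])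
  have vE: "convex E" using hc unfolding E_def convex_fun_def .
  have nE: "(x1, v - 1) \<notin> E" using v unfolding E_def by simp
  obtain A bb where A: "inner A (x1, v - 1) < bb" "\<forall>p\<in>E. inner A p > bb"
    using separating_hyperplane_closed_point[OF vE cE nE] by blast
  obtain a \<beta> where Aab: "A = (a, \<beta>)" by (cases A)
  have "(x1, v) \<in> E" using v unfolding E_def by simp
  then have 1: "inner a x1 + \<beta> * v > bb" using A(2) Aab by auto
  have 2: "inner a x1 + \<beta> * (v - 1) < bb" using A(1) Aab by auto
  have bpos: "\<beta> > 0" using 1 2 by (simp add: algebra_simps)
  show ?thesis
  proof (intro exI allI)
    fix u
    show "ereal (inner (-(1/\<beta>) *\<^sub>R a) u + bb/\<beta>) \<le> h u"
    proof (cases "h u")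
      case (real s)
      then have "(u, s) \<in> E" unfolding E_def by simp
      then have "inner a u + \<beta> * s > bb" using A(2) Aab by auto
      then have "s \<ge> (bb - inner a u)/\<beta>" using bpos by (simp add: field_simps)
      then show ?thesis using real bpos by (simp add: field_simps)
    next
      case PInf then show ?thesis by simp
    next
      case MInf then show ?thesis using ninf by simp
    qed
  qed
qed

lemma prox_exists:
  fixes h :: "'a::euclidean_space \<Rightarrow> ereal" and w y :: 'a and lam :: real
  assumes hp: "proper_fun h" and hc: "convex_fun h" and hl: "lsc_fun h" and lam: "lam > 0"
  shows "\<exists>x. h x < \<infinity> \<and> (\<forall>u. h x + ereal (inner w x + (norm (x - y))\<^sup>2/(2*lam))
            \<le> h u + ereal (inner w u + (norm (u - y))\<^sup>2/(2*lam)))"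
proof -
  have ninf: "h x \<noteq> -\<infinity>" for x using hp unfolding proper_fun_def by auto
  obtain x1 where "h x1 < \<infinity>" using hp unfolding proper_fun_def by auto
  then obtain v where v: "h x1 = ereal v" using ninf[of x1] by (cases "h x1") auto
  obtain a c where ac: "\<And>u. ereal (inner a u + c) \<le> h u" using affine_minorant[OF hp hc hl] by blast
  define g where "g u = inner w u + (norm (u - y))\<^sup>2/(2*lam)" for u
  define M where "M = v + g x1"
  define E where "E = {(x, t::real). h x \<le> ereal t}"
  have cE: "closed E" unfolding E_def by (rule lscp_closed_epi[OF lsc_lscp[OF hl]])
  define S where "S = (\<lambda>p. (fst p, snd p - g (fst p))) -` E \<inter> {p. snd p \<le> M}"
  have contg: "continuous_on UNIV g" unfolding g_def using lam by (intro continuous_intros) auto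
  have closedS: "closed S" unfolding S_def
  proof (intro closed_Int continuous_closed_vimage cE)
    show "continuous (at x) (\<lambda>p. (fst p, snd p - g (fst p)))" for x :: "'a \<times> real"
      unfolding g_def using lam by (intro continuous_intros) auto
    show "closed {p :: 'a \<times> real. snd p \<le> M}"
      by (intro closed_Collect_le continuous_intros)
  qed
  define b where "b = a + w"
  define R2 where "R2 = 4*lam*(M - c - inner b y + lam*(norm b)\<^sup>2)"
  define R where "R = norm y + max 1 R2"
  have memS: "p \<in> S \<longleftrightarrow> h (fst p) \<le> ereal (snd p - g (fst p)) \<and> snd p \<le> M" for p
    unfolding S_def E_def by (cases p) auto
  have keyS: "inner a u + c + g u \<le> t \<and> t \<le> M" if "(u,t) \<in> S" for u t
  proof -
    have "h u \<le> ereal (t - g u)" using that memS[of "(u,t)"] by auto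
    with ac[of u] have "ereal (inner a u + c) \<le> ereal (t - g u)" by (rule order_trans)
    then show ?thesis using that memS[of "(u,t)"] by simp
  qed
  have bndu: "norm u \<le> R" and bndt: "abs t \<le> abs M + abs c + norm b * R" if "(u,t) \<in> S" for u t
  proof -
    have k: "inner a u + c + g u \<le> t" "t \<le> M" using keyS[OF that] by auto
    have ib: "inner b u = inner b (u - y) + inner b y" by (simp add: inner_diff_right)
    have cs: "inner b (u - y) \<ge> - (norm b * norm (u - y))"
      using Cauchy_Schwarz_ineq2[of b "u-y"] by (simp add: abs_le_iff)
    have amgm: "norm b * norm (u - y) \<le> (norm (u-y))\<^sup>2/(4*lam) + lam * (norm b)\<^sup>2"
    proof -
      have "0 \<le> (norm (u-y) - 2*lam*norm b)\<^sup>2" by simp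
      then have "0 \<le> (norm (u-y))\<^sup>2 - 4*lam*(norm (u-y) * norm b) + 4*lam*lam*(norm b)\<^sup>2"
        by (simp add: power2_eq_square algebra_simps)
      then have "4*lam*(norm b * norm (u - y)) \<le> 4*lam*((norm (u-y))\<^sup>2/(4*lam) + lam * (norm b)\<^sup>2)"
        using lam by (simp add: algebra_simps)
      then show ?thesis using lam by (simp add: mult_le_cancel_left_pos)
    qed
    have gu: "g u = inner w u + (norm (u - y))\<^sup>2/(2*lam)" by (simp add: g_def)
    have "(norm (u-y))\<^sup>2/(2*lam) - (norm (u-y))\<^sup>2/(4*lam) \<le> M - c - inner b y + lam*(norm b)\<^sup>2"
      using k ib cs amgm unfolding gu b_def by (simp add: inner_add_left)
    moreover have "(norm (u-y))\<^sup>2/(2*lam) - (norm (u-y))\<^sup>2/(4*lam) = (norm (u-y))\<^sup>2/(4*lam)"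
      using lam by (simp add: field_simps)
    ultimately have "(norm (u-y))\<^sup>2/(4*lam) \<le> M - c - inner b y + lam*(norm b)\<^sup>2" by simp
    then have sq: "(norm (u-y))\<^sup>2 \<le> R2" unfolding R2_def using lam by (simp add: field_simps)
    have "norm (u - y) \<le> max 1 R2"
    proof (cases "norm (u-y) \<le> 1")
      case False
      then have "norm (u-y) * 1 \<le> norm (u-y) * norm (u-y)" by (intro mult_left_mono) auto
      then have "norm (u-y) \<le> (norm (u-y))\<^sup>2" by (simp add: power2_eq_square)
      then show ?thesis using sq by simp
    qed simp
    then show nu: "norm u \<le> R" unfolding R_def using norm_triangle_ineq2[of u y] by linarith
    have "abs (inner b u) \<le> norm b * R"
      using Cauchy_Schwarz_ineq2[of b u] nu by (meson mult_left_mono norm_ge_zero order_trans)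
    moreover have "g u \<ge> inner w u" unfolding gu using lam by simp
    moreover have "inner b u = inner a u + inner w u" unfolding b_def by (simp add: inner_add_left)
    ultimately show "abs t \<le> abs M + abs c + norm b * R" using k unfolding b_def by linarith
  qed
  have boundedS: "bounded S"
  proof (rule bounded_subset[OF bounded_Times[OF bounded_cball bounded_cball]])
    show "S \<subseteq> cball 0 R \<times> cball 0 (abs M + abs c + norm b * R)"
      using bndu bndt by (force simp: dist_norm)
  qed
  have compS: "compact S" using boundedS closedS by (simp add: compact_eq_bounded_closed)
  have x1S: "(x1, M) \<in> S" using v unfolding memS M_def by simp
  have "\<exists>p\<in>S. \<forall>q\<in>S. snd p \<le> snd q"
    using x1S by (intro continuous_attains_inf[OF compS]) (auto intro!: continuous_on_snd continuous_on_id)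
  then obtain p0 where p0: "p0 \<in> S" "\<And>q. q \<in> S \<Longrightarrow> snd p0 \<le> snd q" by blast
  obtain x t0 where xt: "p0 = (x, t0)" by (cases p0)
  have hx: "h x \<le> ereal (t0 - g x)" "t0 \<le> M" using p0(1) xt memS by auto
  then obtain r where r: "h x = ereal r" "r \<le> t0 - g x" using ninf[of x] by (cases "h x") auto
  show ?thesis
  proof (intro exI conjI allI)
    show "h x < \<infinity>" using r by simp
    fix u
    show "h x + ereal (inner w x + (norm (x - y))\<^sup>2/(2*lam)) \<le> h u + ereal (inner w u + (norm (u - y))\<^sup>2/(2*lam))"
    proof (cases "h u")
      case (real s)
      have "t0 \<le> s + g u"
      proof (cases "s + g u \<le> M")
        case True
        then have "(u, s + g u) \<in> S" using real unfolding memS by simp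
        then show ?thesis using p0(2) xt by force
      next
        case False then show ?thesis using hx by simp
      qed
      then show ?thesis using r real unfolding g_def by simp
    next
      case PInf then show ?thesis using r by simp
    next
      case MInf then show ?thesis using ninf by simp
    qed
  qed
qed


locale ucs =
  fixes f h :: "'a::euclidean_space \<Rightarrow> ereal"
    and f' :: "'a \<Rightarrow> 'a"
    and Mf Lf chi lam0 eps :: real
    and x0 :: 'a
  assumes f_proper: "proper_fun f" and f_convex: "convex_fun f" and f_lsc: "lsc_fun f"
    and h_proper: "proper_fun h" and h_convex: "convex_fun h" and h_lsc: "lsc_fun h"
    and dom_sub: "edom h \<subseteq> edom f"
    and subgrad_oracle: "\<And>x. x \<in> edom h \<Longrightarrow> f' x \<in> subdiff f x"
    and Mf_nonneg: "Mf \<ge> 0" and Lf_nonneg: "Lf \<ge> 0"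
    and hoelder: "\<And>x y. x \<in> edom h \<Longrightarrow> y \<in> edom h \<Longrightarrow>
                    norm (f' x - f' y) \<le> 2 * Mf + Lf * norm (x - y)"
    and Xstar_ne: "{x. \<forall>y. f x + h x \<le> f y + h y} \<noteq> {}"
    and x0_dom: "x0 \<in> edom h"
    and chi_range: "0 \<le> chi" "chi < 1"
    and lam0: "lam0 > 0"
    and eps_pos: "eps > 0"
begin

abbreviation "D \<equiv> edom h"
definition "fr x = real_of_ereal (f x)"
definition "hr x = real_of_ereal (h x)"

lemma fn: "f x \<noteq> -\<infinity>" using f_proper unfolding proper_fun_def by auto
lemma hn: "h x \<noteq> -\<infinity>" using h_proper unfolding proper_fun_def by auto

lemma hD: "x \<in> D \<Longrightarrow> h x = ereal (hr x)"
  unfolding hr_def edom_def using hn[of x] by (cases "h x") auto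
lemma fD: "x \<in> D \<Longrightarrow> f x = ereal (fr x)"
  unfolding fr_def using dom_sub fn[of x] unfolding edom_def by (cases "f x") auto
lemma notD: "x \<notin> D \<Longrightarrow> h x = \<infinity>"
  unfolding edom_def by auto

lemma D_conv: assumes "x \<in> D" "y \<in> D" "0 \<le> t" "t \<le> 1" shows "(1-t)*\<^sub>R x + t*\<^sub>R y \<in> D"
proof -
  have "h ((1-t)*\<^sub>R x + t*\<^sub>R y) \<le> ereal ((1-t)*hr x + t*hr y)"
    by (rule convex_fun_ineq[OF h_convex hD[OF assms(1)] hD[OF assms(2)] assms(3,4)])
  then show ?thesis unfolding edom_def by auto
qed

lemma subgrad: assumes "y \<in> D" "u \<in> D" shows "fr u \<ge> fr y + inner (f' y) (u - y)"
proof -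
  have "f u \<ge> f y + ereal (inner (f' y) (u - y))" using subgrad_oracle[OF assms(1)] unfolding subdiff_def by auto
  then show ?thesis using fD[OF assms(1)] fD[OF assms(2)] by simp
qed

lemma sum_Suc_real: "(\<Sum>i<n. real (Suc i)) = real n * (real n + 1) / 2"
  by (induction n) (auto simp: field_simps)

lemma hoelder_bound:
  assumes x: "x \<in> D" and y: "y \<in> D"
  shows "fr x - fr y - inner (f' y) (x - y) \<le> 2*Mf*norm (x-y) + Lf/2*(norm (x-y))\<^sup>2"
proof -
  define r where "r = norm (x - y)"
  define E where "E = fr x - fr y - inner (f' y) (x - y)"
  have bn: "E \<le> 2*Mf*r + Lf/2*r\<^sup>2 + Lf*r\<^sup>2/(2*real n)" if n: "n \<ge> 1" for n :: nat
  proof -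
    define z where "z i = (1 - real i / real n) *\<^sub>R y + (real i / real n) *\<^sub>R x" for i
    have zD: "z i \<in> D" if "i \<le> n" for i unfolding z_def
      using that n by (intro D_conv[OF y x]) auto
    have z0: "z 0 = y" unfolding z_def by simp
    have zn: "z n = x" unfolding z_def using n by simp
    have zalt: "z i = y + (real i / real n) *\<^sub>R (x - y)" for i
      unfolding z_def by (simp add: algebra_simps)
    have zdiff: "z (Suc i) - z i = (1/real n) *\<^sub>R (x - y)" for i
    proof -
      have "z (Suc i) - z i = (real (Suc i)/real n - real i/real n) *\<^sub>R (x-y)"
        unfolding zalt by (simp only: scaleR_diff_left) simp
      also have "real (Suc i)/real n - real i/real n = 1/real n" by (simp add: diff_divide_distrib[symmetric])
      finally show ?thesis .
    qed
    have zy: "z i - y = (real i / real n) *\<^sub>R (x - y)" for i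
      unfolding zalt by simp
    have step: "fr (z (Suc i)) - fr (z i) - inner (f' y) (z (Suc i) - z i)
        \<le> (2*Mf + Lf * (real (Suc i) / real n) * r) * (r / real n)" if i: "i < n" for i
    proof -
      have a: "fr (z i) \<ge> fr (z (Suc i)) + inner (f' (z (Suc i))) (z i - z (Suc i))"
        using subgrad[OF zD zD] i by auto
      have "fr (z (Suc i)) - fr (z i) - inner (f' y) (z (Suc i) - z i)
          \<le> inner (f' (z (Suc i)) - f' y) (z (Suc i) - z i)"
        using a by (simp add: inner_diff_left inner_diff_right)
      also have "\<dots> \<le> norm (f' (z (Suc i)) - f' y) * norm (z (Suc i) - z i)"
        by (rule norm_cauchy_schwarz)
      also have "norm (z (Suc i) - z i) = r / real n" unfolding zdiff r_def using n by simp
      also have "norm (f' (z (Suc i)) - f' y) \<le> 2*Mf + Lf * (real (Suc i) / real n) * r"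
      proof -
        have "norm (f' (z (Suc i)) - f' y) \<le> 2 * Mf + Lf * norm (z (Suc i) - y)"
          using hoelder[OF zD y] i by auto
        also have "norm (z (Suc i) - y) = (real (Suc i) / real n) * r" unfolding zy r_def by simp
        finally show ?thesis by (simp add: mult.assoc)
      qed
      then have "norm (f' (z (Suc i)) - f' y) * (r / real n) \<le> (2*Mf + Lf * (real (Suc i) / real n) * r) * (r / real n)"
        by (rule mult_right_mono) (simp add: r_def)
      finally show ?thesis .
    qed
    have "E = (\<Sum>i<n. fr (z (Suc i)) - fr (z i) - inner (f' y) (z (Suc i) - z i))"
    proof -
      have "(\<Sum>i<n. fr (z (Suc i)) - fr (z i)) = fr x - fr y"
        using sum_lessThan_telescope[of "\<lambda>i. fr (z i)" n] z0 zn by simp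
      moreover have "(\<Sum>i<n. inner (f' y) (z (Suc i) - z i)) = inner (f' y) (x - y)"
      proof -
        have "(\<Sum>i<n. inner (f' y) (z (Suc i) - z i)) = inner (f' y) (\<Sum>i<n. z (Suc i) - z i)"
          by (simp add: inner_sum_right)
        also have "(\<Sum>i<n. z (Suc i) - z i) = z n - z 0" by (rule sum_lessThan_telescope)
        finally show ?thesis using z0 zn by simp
      qed
      ultimately show ?thesis unfolding E_def by (simp add: sum_subtractf)
    qed
    also have "\<dots> \<le> (\<Sum>i<n. (2*Mf + Lf * (real (Suc i) / real n) * r) * (r / real n))"
      by (rule sum_mono) (use step in auto)
    also have "\<dots> = 2*Mf*r + Lf*r\<^sup>2/(real n)^2 * (\<Sum>i<n. real (Suc i))"
      using n by (simp add: sum.distrib sum_distrib_left sum_distrib_right sum_divide_distrib[symmetric]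
          field_simps power2_eq_square)
    also have "\<dots> = 2*Mf*r + Lf/2*r\<^sup>2 + Lf*r\<^sup>2/(2*real n)"
      unfolding sum_Suc_real using n by (simp add: field_simps power2_eq_square)
    finally show ?thesis .
  qed
  have "E \<le> 2*Mf*r + Lf/2*r\<^sup>2"
  proof (rule ccontr)
    assume "\<not> ?thesis"
    then have del: "E - (2*Mf*r + Lf/2*r\<^sup>2) > 0" by simp
    define \<delta> where "\<delta> = E - (2*Mf*r + Lf/2*r\<^sup>2)"
    have dp: "\<delta> > 0" using del unfolding \<delta>_def .
    obtain n :: nat where n: "Lf*r\<^sup>2/(2*\<delta>) < real n" using reals_Archimedean2 by blast
    have L0: "Lf*r\<^sup>2 \<ge> 0" using Lf_nonneg by simp
    have n1: "n \<ge> 1"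
    proof (rule ccontr)
      assume "\<not> n \<ge> 1" then have "n = 0" by simp
      then show False using n dp L0 by (simp add: divide_less_0_iff not_less)
    qed
    have "Lf*r\<^sup>2 < real n * (2*\<delta>)"
      using n dp by (simp add: divide_less_eq)
    then have "Lf*r\<^sup>2 < \<delta> * (2*real n)" by (simp add: algebra_simps)
    then have "Lf*r\<^sup>2/(2*real n) < \<delta>"
      using n1 by (simp add: pos_divide_less_eq)
    then show False using bn[OF n1] unfolding \<delta>_def by simp
  qed
  then show ?thesis unfolding E_def r_def .
qed

end

context ucs begin

definition "Xs = {x. \<forall>y. f x + h x \<le> f y + h y}"

lemma phi_ninf: "f x + h x \<noteq> -\<infinity>" using fn[of x] hn[of x] by (cases "f x"; cases "h x") auto

lemma phiD: "x \<in> D \<Longrightarrow> f x + h x = ereal (fr x + hr x)" using fD hD by simp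

lemma phi_notD: "x \<notin> D \<Longrightarrow> f x + h x = \<infinity>" using notD[of x] fn[of x] by (cases "f x") auto

lemma Xs_closed: "closed Xs"
proof -
  obtain xm where xm: "xm \<in> Xs" using Xstar_ne unfolding Xs_def by blast
  have "f xm + h xm \<le> f x0 + h x0" using xm unfolding Xs_def by auto
  then have le: "f xm + h xm \<le> ereal (fr x0 + hr x0)" using phiD[OF x0_dom] by simp
  obtain c where c: "f xm + h xm = ereal c"
  proof (cases "f xm + h xm")
    case (real r) then show ?thesis by (rule that)
  next
    case PInf then show ?thesis using le by (simp only: PInf) simp
  next
    case MInf then show ?thesis using phi_ninf[of xm] by simp
  qed
  have "Xs = {x. f x + h x \<le> ereal c}"
  proof safe
    fix x assume "x \<in> Xs" then show "f x + h x \<le> ereal c" unfolding Xs_def c[symmetric] by blast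
  next
    fix x assume x: "f x + h x \<le> ereal c"
    have "f x + h x \<le> f y + h y" for y
    proof -
      have "f xm + h xm \<le> f y + h y" using xm unfolding Xs_def by blast
      then show ?thesis using x unfolding c by (rule order_trans[rotated])
    qed
    then show "x \<in> Xs" unfolding Xs_def by blast
  qed
  moreover have "closed {x. f x + h x \<le> ereal c}"
    by (rule lscp_closed_sub[OF lscp_add[OF lsc_lscp[OF f_lsc] lsc_lscp[OF h_lsc] fn hn]])
  ultimately show ?thesis by simp
qed

definition "xs = (SOME x. x \<in> Xs \<and> infdist x0 Xs = dist x0 x)"

lemma xs: "xs \<in> Xs" "infdist x0 Xs = dist x0 xs"
proof -
  have "Xs \<noteq> {}" using Xstar_ne unfolding Xs_def .
  then obtain x where "x \<in> Xs" "infdist x0 Xs = dist x0 x" using infdist_attains_inf[OF Xs_closed] by blast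
  then have "xs \<in> Xs \<and> infdist x0 Xs = dist x0 xs" unfolding xs_def by (rule someI[where P="\<lambda>x. x \<in> Xs \<and> infdist x0 Xs = dist x0 x", OF conjI])
  then show "xs \<in> Xs" "infdist x0 Xs = dist x0 xs" by auto
qed

lemma xsD: "xs \<in> D"
proof (rule ccontr)
  assume "xs \<notin> D"
  then have eq: "f xs + h xs = \<infinity>" by (rule phi_notD)
  have "f xs + h xs \<le> f x0 + h x0" using xs(1) unfolding Xs_def by auto
  then have "f xs + h xs \<le> ereal (fr x0 + hr x0)" using phiD[OF x0_dom] by simp
  then show False unfolding eq by simp
qed

definition "pstar = fr xs + hr xs"

lemma pstar_le: assumes u: "u \<in> D" shows "pstar \<le> fr u + hr u"
proof -
  have "f xs + h xs \<le> f u + h u" using xs(1) unfolding Xs_def by blast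
  then show ?thesis unfolding pstar_def phiD[OF xsD] phiD[OF u] by simp
qed

lemma INF_eq: "(INF y. f y + h y) = ereal pstar"
proof (rule antisym)
  have "(INF y. f y + h y) \<le> f xs + h xs" by (rule INF_lower) simp
  then show "(INF y. f y + h y) \<le> ereal pstar" unfolding pstar_def phiD[OF xsD] .
  show "ereal pstar \<le> (INF y. f y + h y)"
  proof (rule INF_greatest)
    fix y
    have "f xs + h xs \<le> f y + h y" using xs(1) unfolding Xs_def by blast
    then show "ereal pstar \<le> f y + h y" unfolding pstar_def phiD[OF xsD] .
  qed
qed

definition "prox y lam = ucs_prox f f' h y lam"
definition "Fr y lam u = inner (f' y) (u - y) + hr u + (norm (u - y))\<^sup>2/(2*lam)"

lemma prox_min:
  assumes y: "y \<in> D" and lam: "lam > 0"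
  shows "prox y lam \<in> D" "\<And>u. u \<in> D \<Longrightarrow> Fr y lam (prox y lam) \<le> Fr y lam u"
proof -
  define P where "P x = (\<forall>u. lin_f f f' x y + h x + ereal ((norm (x - y))\<^sup>2 / (2 * lam))
               \<le> lin_f f f' u y + h u + ereal ((norm (u - y))\<^sup>2 / (2 * lam)))" for x
  have lin: "lin_f f f' v y = ereal (fr y + inner (f' y) (v - y))" for v
    unfolding lin_f_def using fD[OF y] by simp
  obtain x1 where x1: "h x1 < \<infinity>" "\<And>u. h x1 + ereal (inner (f' y) x1 + (norm (x1 - y))\<^sup>2/(2*lam))
            \<le> h u + ereal (inner (f' y) u + (norm (u - y))\<^sup>2/(2*lam))"
    using prox_exists[OF h_proper h_convex h_lsc lam, of "f' y" y] by blast
  have x1D: "x1 \<in> D" using x1(1) unfolding edom_def by simp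
  have "P x1" unfolding P_def
  proof
    fix u
    show "lin_f f f' x1 y + h x1 + ereal ((norm (x1 - y))\<^sup>2 / (2 * lam))
               \<le> lin_f f f' u y + h u + ereal ((norm (u - y))\<^sup>2 / (2 * lam))"
    proof (cases "u \<in> D")
      case True
      have "hr x1 + (inner (f' y) x1 + (norm (x1 - y))\<^sup>2/(2*lam)) \<le> hr u + (inner (f' y) u + (norm (u - y))\<^sup>2/(2*lam))"
        using x1(2)[of u] hD[OF x1D] hD[OF True] by simp
      then show ?thesis unfolding lin using hD[OF x1D] hD[OF True] by (simp add: inner_diff_right)
    next
      case False
      then show ?thesis unfolding lin using notD[OF False] hD[OF x1D] by simp
    qed
  qed
  then have Px: "P (prox y lam)" unfolding prox_def ucs_prox_def P_def[symmetric] by (rule someI)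
  show pD: "prox y lam \<in> D"
  proof (rule ccontr)
    assume "prox y lam \<notin> D"
    then have "h (prox y lam) = \<infinity>" by (rule notD)
    then show False using Px[unfolded P_def, rule_format, of y] unfolding lin using hD[OF y] by simp
  qed
  fix u assume u: "u \<in> D"
  have "lin_f f f' (prox y lam) y + h (prox y lam) + ereal ((norm (prox y lam - y))\<^sup>2 / (2 * lam))
               \<le> lin_f f f' u y + h u + ereal ((norm (u - y))\<^sup>2 / (2 * lam))"
    using Px unfolding P_def by blast
  then show "Fr y lam (prox y lam) \<le> Fr y lam u" unfolding lin Fr_def using hD[OF pD] hD[OF u] by simp
qed

lemma three_point:
  assumes y: "y \<in> D" and lam: "lam > 0" and nu: "nu \<ge> 0" "sc_ineq h nu" and u: "u \<in> D"
  shows "Fr y lam (prox y lam) + (1/(2*lam) + nu/2) * (norm (u - prox y lam))\<^sup>2 \<le> Fr y lam u"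
proof -
  define x where "x = prox y lam"
  have xD: "x \<in> D" unfolding x_def by (rule prox_min[OF y lam])
  define \<sigma> where "\<sigma> = 1/(2*lam) + nu/2"
  define N where "N = (norm (x - u))\<^sup>2"
  define W where "W = Fr y lam u - Fr y lam x - \<sigma> * N"
  have "s * (\<sigma> * N) \<le> Fr y lam u - Fr y lam x" if s: "0 < s" "s < 1" for s
  proof -
    define t where "t = 1 - s"
    have t: "0 < t" "t < 1" using s unfolding t_def by auto
    define z where "z = (1-t) *\<^sub>R x + t *\<^sub>R u"
    have zD: "z \<in> D" unfolding z_def using xD u t by (intro D_conv) auto
    have m: "Fr y lam x \<le> Fr y lam z" unfolding x_def by (rule prox_min(2)[OF y lam zD])
    have hz: "hr z \<le> (1-t)*hr x + t*hr u - nu/2*t*(1-t)*N"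
      using scD[OF nu(2) hD[OF xD] hD[OF u], of t] t hD[OF zD] unfolding z_def N_def by simp
    have zy: "z - y = (1-t) *\<^sub>R (x - y) + t *\<^sub>R (u - y)" unfolding z_def by (simp add: algebra_simps)
    have inz: "inner (f' y) (z - y) = (1-t) * inner (f' y) (x - y) + t * inner (f' y) (u - y)"
      unfolding zy by (simp add: inner_add_right)
    have nz: "(norm (z - y))\<^sup>2 = (1-t)*(norm (x-y))\<^sup>2 + t*(norm (u-y))\<^sup>2 - t*(1-t)*N"
      unfolding zy norm_comb N_def by (simp add: algebra_simps)
    have "Fr y lam z \<le> (1-t)*inner (f' y) (x - y) + t*inner (f' y) (u - y) + ((1-t)*hr x + t*hr u - nu/2*t*(1-t)*N)
        + ((1-t)*(norm (x-y))\<^sup>2 + t*(norm (u-y))\<^sup>2 - t*(1-t)*N)/(2*lam)"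
      unfolding Fr_def inz nz using hz by simp
    also have "\<dots> = Fr y lam x + t * (Fr y lam u - Fr y lam x - (1-t) * (\<sigma> * N))"
      unfolding Fr_def \<sigma>_def using lam by (simp add: field_simps)
    finally have "0 \<le> t * (Fr y lam u - Fr y lam x - (1-t) * (\<sigma> * N))" using m by simp
    then have "0 \<le> Fr y lam u - Fr y lam x - (1-t) * (\<sigma> * N)" using t by (simp add: zero_le_mult_iff)
    then show ?thesis unfolding t_def by simp
  qed
  then have "\<sigma> * N \<le> Fr y lam u - Fr y lam x" by (rule field_le_mult_one_interval)
  then show ?thesis unfolding x_def[symmetric] \<sigma>_def N_def by (simp add: norm_minus_commute)
qed

end

context ucs begin

definition "G = Lf + 4*Mf\<^sup>2/((1-chi)*eps)"
definition "Q = 8 * Mf\<^sup>2 / (1 - chi)\<^sup>2 + eps * (1 / lam0 + 2 * Lf / (1 - chi)\<^sup>2)"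

lemma acc_iff:
  assumes "x \<in> D" "y \<in> D"
  shows "ucs_accept f f' chi eps x y lam \<longleftrightarrow>
    fr x - (fr y + inner (f' y) (x - y)) - (1-chi)*(norm(x-y))\<^sup>2/(2*lam) \<le> (1-chi)*eps/2"
  unfolding ucs_accept_def lin_f_def fD[OF assms(1)] fD[OF assms(2)] by simp

lemma stop_iff:
  assumes "x \<in> D"
  shows "(f x + h x - (INF y. f y + h y) \<le> ereal eps) \<longleftrightarrow> fr x + hr x - pstar \<le> eps"
  unfolding INF_eq phiD[OF assms] by simp

lemma accept_small:
  assumes y: "y \<in> D" and lam: "lam > 0" and small: "lam * G \<le> 1 - chi"
  shows "fr (prox y lam) - (fr y + inner (f' y) (prox y lam - y)) - (1-chi)*(norm(prox y lam - y))\<^sup>2/(2*lam) \<le> (1-chi)*eps/2"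
proof -
  define x where "x = prox y lam"
  have xD: "x \<in> D" unfolding x_def by (rule prox_min[OF y lam])
  define r where "r = norm (x - y)"
  define k where "k = (1-chi)*eps"
  have k: "k > 0" unfolding k_def using chi_range eps_pos by simp
  have hb: "fr x - fr y - inner (f' y) (x - y) \<le> 2*Mf*r + Lf/2*r\<^sup>2"
    unfolding r_def by (rule hoelder_bound[OF xD y])
  have "lam * G * (r\<^sup>2/(2*lam)) \<le> (1-chi) * (r\<^sup>2/(2*lam))"
    using small lam by (intro mult_right_mono) auto
  moreover have "lam * G * (r\<^sup>2/(2*lam)) = (Lf + 4*Mf\<^sup>2/k)*r\<^sup>2/2" using lam unfolding G_def k_def by (simp add: field_simps)
  moreover have "(1-chi) * (r\<^sup>2/(2*lam)) = (1-chi)*r\<^sup>2/(2*lam)" by simp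
  ultimately have G1: "(Lf + 4*Mf\<^sup>2/k)*r\<^sup>2/2 \<le> (1-chi)*r\<^sup>2/(2*lam)" by linarith
  have G2: "(Lf + 4*Mf\<^sup>2/k)*r\<^sup>2/2 = Lf/2*r\<^sup>2 + 2*Mf\<^sup>2*r\<^sup>2/k"
    using k by (simp add: field_simps)
  have "0 \<le> (2*Mf*r - k)\<^sup>2/(2*k)" using k by simp
  also have "(2*Mf*r - k)\<^sup>2/(2*k) = 2*Mf\<^sup>2*r\<^sup>2/k + k/2 - 2*Mf*r"
    using k by (simp add: field_simps power2_eq_square)
  finally have amgm: "2*Mf*r \<le> 2*Mf\<^sup>2*r\<^sup>2/k + k/2" by simp
  have "fr x - (fr y + inner (f' y) (x - y)) - (1-chi)*r\<^sup>2/(2*lam) \<le> k/2"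
    using hb G1 G2 amgm by linarith
  then show ?thesis unfolding x_def[symmetric] r_def[symmetric] k_def by simp
qed

lemma step1:
  assumes y: "y \<in> D" and lam: "lam > 0" and nu: "nu \<ge> 0" "sc_ineq h nu"
    and acc: "fr (prox y lam) - (fr y + inner (f' y) (prox y lam - y)) - (1-chi)*(norm(prox y lam - y))\<^sup>2/(2*lam) \<le> (1-chi)*eps/2"
    and ns: "fr (prox y lam) + hr (prox y lam) - pstar > eps"
  shows "(1 + lam*nu)*(norm (prox y lam - xs))\<^sup>2 + lam*(1+chi)*eps \<le> (norm (y - xs))\<^sup>2"
proof -
  define x where "x = prox y lam"
  have xD: "x \<in> D" unfolding x_def by (rule prox_min[OF y lam])
  have tp: "Fr y lam x + (1/(2*lam) + nu/2) * (norm (xs - x))\<^sup>2 \<le> Fr y lam xs"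
    unfolding x_def by (rule three_point[OF y lam nu xsD])
  have sg: "fr xs \<ge> fr y + inner (f' y) (xs - y)" by (rule subgrad[OF y xsD])
  define r2 where "r2 = (norm (x - y))\<^sup>2"
  define d2 where "d2 = (norm (x - xs))\<^sup>2"
  define D2 where "D2 = (norm (y - xs))\<^sup>2"
  define P where "P = fr x + hr x - pstar"
  define \<sigma> where "\<sigma> = 1/(2*lam) + nu/2"
  have tp2: "inner (f' y) (x - y) + hr x + r2/(2*lam) + \<sigma> * d2 \<le> inner (f' y) (xs - y) + hr xs + D2/(2*lam)"
    using tp unfolding Fr_def r2_def d2_def D2_def \<sigma>_def by (simp add: norm_minus_commute)
  have acc2: "fr x - (fr y + inner (f' y) (x - y)) - (1-chi)*r2/(2*lam) \<le> (1-chi)*eps/2"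
    using acc unfolding x_def r2_def .
  have e1: "(1-chi)*r2/(2*lam) = r2/(2*lam) - chi*(r2/(2*lam))" using lam by (simp add: field_simps)
  have L: "P + chi*(r2/(2*lam)) + \<sigma> * d2 \<le> D2/(2*lam) + (1-chi)*eps/2"
    using tp2 acc2 sg e1 unfolding P_def pstar_def by linarith
  then have "2*lam*(P + chi*(r2/(2*lam)) + \<sigma> * d2) \<le> 2*lam*(D2/(2*lam) + (1-chi)*eps/2)"
    using lam by (intro mult_left_mono) auto
  moreover have "2*lam*(P + chi*(r2/(2*lam)) + \<sigma> * d2) = 2*lam*P + chi*r2 + (1+lam*nu)*d2"
    using lam unfolding \<sigma>_def by (simp add: field_simps)
  moreover have "2*lam*(D2/(2*lam) + (1-chi)*eps/2) = D2 + lam*eps - lam*chi*eps"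
    using lam by (simp add: field_simps)
  ultimately have L2: "2*lam*P + chi*r2 + (1+lam*nu)*d2 \<le> D2 + lam*eps - lam*chi*eps" by linarith
  have "lam*eps < lam*P" using ns lam unfolding P_def x_def by simp
  moreover have "chi*r2 \<ge> 0" using chi_range unfolding r2_def by simp
  ultimately have "(1+lam*nu)*d2 + lam*eps + lam*chi*eps \<le> D2" using L2 by linarith
  then show ?thesis unfolding x_def[symmetric] d2_def D2_def by (simp add: algebra_simps)
qed

lemma step2:
  assumes y: "y \<in> D" and lam: "lam > 0" and mu: "mu \<ge> 0" "sc_ineq (\<lambda>x. f x + h x) mu"
    and acc: "fr (prox y lam) - (fr y + inner (f' y) (prox y lam - y)) - (1-chi)*(norm(prox y lam - y))\<^sup>2/(2*lam) \<le> (1-chi)*eps/2"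
    and ns: "fr (prox y lam) + hr (prox y lam) - pstar > eps"
  shows "(1 + chi*lam*mu)*(norm (prox y lam - xs))\<^sup>2 + lam*eps \<le> (norm (y - xs))\<^sup>2"
proof -
  define x where "x = prox y lam"
  have xD: "x \<in> D" unfolding x_def by (rule prox_min[OF y lam])
  define u where "u = (1-chi)*\<^sub>R xs + chi*\<^sub>R x"
  have uD: "u \<in> D" unfolding u_def using chi_range by (intro D_conv[OF xsD xD]) auto
  have tp: "Fr y lam x + (1/(2*lam) + 0/2) * (norm (u - x))\<^sup>2 \<le> Fr y lam u"
    unfolding x_def by (rule three_point[OF y lam _ convex_sc0[OF hn h_convex] uD]) simp
  have sg: "fr u \<ge> fr y + inner (f' y) (u - y)" by (rule subgrad[OF y uD])
  have scu: "(\<lambda>x. f x + h x) u \<le> ereal ((1-chi)*pstar + chi*(fr x + hr x) - mu/2*chi*(1-chi)*(norm(xs - x))\<^sup>2)"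
    unfolding u_def pstar_def by (rule scD[OF mu(2) phiD[OF xsD] phiD[OF xD]]) (use chi_range in auto)
  then have scu2: "fr u + hr u \<le> (1-chi)*pstar + chi*(fr x + hr x) - mu/2*chi*(1-chi)*(norm(xs - x))\<^sup>2"
    using phiD[OF uD] by simp
  define r2 where "r2 = (norm (x - y))\<^sup>2"
  define d2 where "d2 = (norm (x - xs))\<^sup>2"
  define D2 where "D2 = (norm (y - xs))\<^sup>2"
  define U2 where "U2 = (norm (u - y))\<^sup>2"
  define IP where "IP = inner (xs - x) (x - y)"
  have ux: "u - x = (1-chi) *\<^sub>R (xs - x)" unfolding u_def by (simp add: algebra_simps)
  have uy: "u - y = (1-chi) *\<^sub>R (xs - x) + (x - y)" unfolding u_def by (simp add: algebra_simps)
  have nux: "(norm (u - x))\<^sup>2 = (1-chi)\<^sup>2 * d2"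
    unfolding ux d2_def using chi_range by (simp add: power_mult_distrib norm_minus_commute)
  have nuy: "U2 = (1-chi)\<^sup>2 * d2 + 2*(1-chi)*IP + r2"
    unfolding U2_def uy d2_def r2_def IP_def power2_norm_eq_inner
    by (simp add: inner_add_left inner_add_right inner_commute power2_eq_square algebra_simps norm_minus_commute)
  have nD: "D2 = d2 + 2*IP + r2"
  proof -
    have "y - xs = -((xs - x) + (x - y))" by simp
    then have "D2 = (norm ((xs - x) + (x - y)))\<^sup>2" unfolding D2_def by (metis norm_minus_cancel)
    then show ?thesis unfolding d2_def r2_def IP_def power2_norm_eq_inner
      by (simp add: inner_add_left inner_add_right inner_commute norm_minus_commute algebra_simps)
  qed
  define A where "A = r2/(2*lam)"
  define Dd where "Dd = (D2 - d2)/(2*lam)"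
  have tp2: "inner (f' y) (x - y) + hr x + A + (1-chi)\<^sup>2 * d2/(2*lam) \<le> inner (f' y) (u - y) + hr u + U2/(2*lam)"
    using tp unfolding Fr_def nux A_def r2_def U2_def by simp
  have e2: "U2/(2*lam) - A - (1-chi)\<^sup>2 * d2/(2*lam) + (1-chi)*A = (1-chi)*Dd"
    unfolding nuy Dd_def nD A_def using lam by (simp add: field_simps power2_eq_square)
  have acc2: "fr x - (fr y + inner (f' y) (x - y)) - (1-chi)*A \<le> (1-chi)*eps/2"
    using acc unfolding x_def[symmetric] A_def r2_def by (simp add: field_simps)
  define phx where "phx = fr x + hr x"
  have a1: "phx \<le> fr u + hr u + (1-chi)*Dd + (1-chi)*eps/2"
    using tp2 e2 acc2 sg unfolding phx_def by linarith
  have scu3: "fr u + hr u \<le> (1-chi)*pstar + chi*phx - mu/2*chi*(1-chi)*d2"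
    using scu2 unfolding phx_def d2_def by (simp add: norm_minus_commute)
  have "(1-chi)*(phx - pstar + mu/2*chi*d2 - Dd - eps/2) = phx - (chi*phx + (1-chi)*pstar - mu/2*chi*(1-chi)*d2) - (1-chi)*Dd - (1-chi)*eps/2"
    by (simp add: algebra_simps)
  then have "(1-chi)*(phx - pstar + mu/2*chi*d2 - Dd - eps/2) \<le> 0" using a1 scu3 by linarith
  then have b1: "phx - pstar + mu/2*chi*d2 - Dd - eps/2 \<le> 0"
    using chi_range by (simp add: mult_le_0_iff)
  have "2*lam*(phx - pstar + mu/2*chi*d2 - Dd - eps/2) \<le> 0" using b1 lam by (simp add: mult_nonneg_nonpos)
  moreover have "2*lam*(phx - pstar + mu/2*chi*d2 - Dd - eps/2) = 2*lam*(phx - pstar) + lam*mu*chi*d2 - (D2 - d2) - lam*eps"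
    unfolding Dd_def using lam by (simp add: field_simps)
  ultimately have b2: "2*lam*(phx - pstar) + lam*mu*chi*d2 - (D2 - d2) - lam*eps \<le> 0" by simp
  have "lam*eps < lam*(phx - pstar)" using ns lam unfolding phx_def x_def by simp
  then have "(1 + chi*lam*mu)*d2 + lam*eps \<le> D2" using b2 by (simp add: algebra_simps)
  then show ?thesis unfolding x_def[symmetric] d2_def D2_def .
qed

end

context ucs begin

definition "st j = ucs_state f f' h chi eps x0 lam0 j"
definition "yy j = fst (st j)"
definition "ll j = snd (st j)"
definition "acc j = ucs_accept f f' chi eps (prox (yy j) (ll j)) (yy j) (ll j)"
definition "stops j = ucs_stops_at f f' h chi eps x0 lam0 j"
definition "KK j = (\<Sum>i<j. if acc i then 1 else 0 :: nat)"
definition "HH j = (\<Sum>i<j. if acc i then 0 else 1 :: nat)"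
definition "d0 = norm (x0 - xs)"

lemma st0: "yy 0 = x0" "ll 0 = lam0" unfolding yy_def ll_def st_def by simp_all

lemma st_Suc: "st (Suc j) = (if acc j then (prox (yy j) (ll j), ll j) else (yy j, ll j / 2))"
  unfolding st_def yy_def ll_def acc_def prox_def by (simp add: split_beta Let_def)

lemma stops_iff: "stops j \<longleftrightarrow> f (prox (yy j) (ll j)) + h (prox (yy j) (ll j)) - (INF y. f y + h y) \<le> ereal eps"
  unfolding stops_def ucs_stops_at_def yy_def ll_def st_def prox_def by (simp add: split_beta Let_def)

lemma KK0: "KK 0 = 0" and HH0: "HH 0 = 0" unfolding KK_def HH_def by simp_all
lemma KK_Suc: "KK (Suc j) = KK j + (if acc j then 1 else 0)" unfolding KK_def by simp
lemma HH_Suc: "HH (Suc j) = HH j + (if acc j then 0 else 1)" unfolding HH_def by simp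
lemma KH: "KK j + HH j = j" by (induction j) (auto simp: KK0 HH0 KK_Suc HH_Suc)

lemma chi1: "1 - chi > 0" "1 - chi \<le> 1" using chi_range by auto

lemma G_nonneg: "G \<ge> 0" unfolding G_def using Lf_nonneg chi_range eps_pos by simp

lemma Qa: "eps/lam0 \<le> Q"
proof -
  have "0 \<le> 8 * Mf\<^sup>2 / (1 - chi)\<^sup>2" by simp
  moreover have "0 \<le> eps * (2 * Lf / (1 - chi)\<^sup>2)" using eps_pos Lf_nonneg by simp
  ultimately show ?thesis unfolding Q_def by (simp add: distrib_left)
qed

lemma Qpos: "Q > 0" using Qa eps_pos lam0 by (metis divide_pos_pos order_less_le_trans)

lemma Qb: "2*G*eps/(1-chi) + eps/lam0 \<le> Q"
proof -
  define k where "k = 1 - chi"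
  have k: "k > 0" unfolding k_def using chi1 by simp
  have ge: "G*eps = Lf*eps + 4*Mf\<^sup>2/k" unfolding G_def k_def[symmetric] using k eps_pos by (simp add: field_simps)
  have "2*G*eps/k = 2*(G*eps)/k" by simp
  also have "\<dots> = 2*Lf*eps/k + 8*Mf\<^sup>2/k\<^sup>2" unfolding ge using k by (simp add: field_simps power2_eq_square)
  finally have a: "2*G*eps/(1-chi) = 2*Lf*eps/(1-chi) + 8*Mf\<^sup>2/(1-chi)\<^sup>2" unfolding k_def .
  have "2*Lf*eps/(1-chi) \<le> 2*Lf*eps/(1-chi)\<^sup>2"
  proof -
    have "(1-chi)\<^sup>2 \<le> (1-chi)" using chi1 by (simp add: power2_eq_square mult_le_cancel_left1)
    moreover have "0 < (1-chi)\<^sup>2" using chi1 by simp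
    moreover have "0 \<le> 2*Lf*eps" using Lf_nonneg eps_pos by simp
    moreover have "0 < (1-chi)*(1-chi)\<^sup>2" using chi1(1) by simp
    ultimately show ?thesis by (intro divide_left_mono) auto
  qed
  moreover have "eps * (2 * Lf / (1 - chi)\<^sup>2) = 2 * Lf * eps / (1 - chi)\<^sup>2" by simp
  moreover have "Q = 8*Mf\<^sup>2/(1-chi)\<^sup>2 + eps/lam0 + eps * (2 * Lf / (1 - chi)\<^sup>2)" unfolding Q_def by (simp add: distrib_left)
  ultimately show ?thesis unfolding a by linarith
qed

lemma lam_lb:
  assumes lam: "lam > 0" and c: "lam = lam0 \<or> 2*lam*G > 1 - chi"
  shows "eps \<le> Q*lam"
  using c
proof
  assume "lam = lam0"
  then show ?thesis using Qa lam by (simp add: divide_le_eq)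
next
  assume g: "2*lam*G > 1 - chi"
  have "(1-chi)*eps < (2*lam*G)*eps" using g eps_pos by (rule mult_strict_right_mono)
  then have "eps < 2*lam*G*eps/(1-chi)" using chi1 by (simp add: pos_less_divide_eq mult.commute)
  also have "2*lam*G*eps/(1-chi) = lam * (2*G*eps/(1-chi))" by simp
  also have "\<dots> \<le> lam * Q"
  proof -
    have "2*G*eps/(1-chi) \<le> Q" using Qb lam0 eps_pos by (smt (verit) divide_pos_pos)
    then show ?thesis using lam by (intro mult_left_mono) auto
  qed
  finally show ?thesis by (simp add: mult.commute)
qed

lemma inv:
  assumes "\<forall>i<j. \<not> stops i"
  shows "yy j \<in> D \<and> ll j = lam0 / 2^(HH j) \<and> (HH j = 0 \<or> 2*(ll j)*G > 1-chi)
     \<and> (norm (yy j - xs))\<^sup>2 + real (KK j) * (eps\<^sup>2/Q) \<le> d0\<^sup>2"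
  using assms
proof (induction j)
  case 0
  then show ?case using x0_dom by (simp add: st0 KK0 HH0 d0_def)
next
  case (Suc j)
  then have IH: "yy j \<in> D" "ll j = lam0 / 2^(HH j)" "HH j = 0 \<or> 2*(ll j)*G > 1-chi"
     "(norm (yy j - xs))\<^sup>2 + real (KK j) * (eps\<^sup>2/Q) \<le> d0\<^sup>2" by auto
  have ns: "\<not> stops j" using Suc.prems by auto
  define y where "y = yy j"
  define lam where "lam = ll j"
  define x where "x = prox y lam"
  have lam: "lam > 0" unfolding lam_def IH(2) using lam0 by simp
  have yD: "y \<in> D" using IH(1) unfolding y_def .
  have xD: "x \<in> D" unfolding x_def by (rule prox_min[OF yD lam])
  have lamc: "lam = lam0 \<or> 2*lam*G > 1 - chi" using IH(2,3) unfolding lam_def by auto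
  have lb: "eps \<le> Q*lam" by (rule lam_lb[OF lam lamc])
  have nst: "fr x + hr x - pstar > eps"
    using ns unfolding stops_iff stop_iff[OF xD[unfolded x_def y_def lam_def]] x_def y_def lam_def by simp
  show ?case
  proof (cases "acc j")
    case True
    have st: "yy (Suc j) = x" "ll (Suc j) = lam" unfolding yy_def ll_def st_Suc using True
      by (simp_all add: x_def y_def lam_def yy_def ll_def)
    have accr: "fr x - (fr y + inner (f' y) (x - y)) - (1-chi)*(norm(x-y))\<^sup>2/(2*lam) \<le> (1-chi)*eps/2"
      using True unfolding acc_def acc_iff[OF xD[unfolded x_def y_def lam_def] IH(1)] x_def y_def lam_def .
    have s1: "(1 + lam*0)*(norm (x - xs))\<^sup>2 + lam*(1+chi)*eps \<le> (norm (y - xs))\<^sup>2"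
      unfolding x_def by (rule step1[OF yD lam _ convex_sc0[OF hn h_convex]]) (use accr nst in \<open>auto simp: x_def\<close>)
    have "eps\<^sup>2/Q \<le> lam*eps" using lb Qpos eps_pos by (simp add: field_simps power2_eq_square)
    moreover have "lam*eps \<le> lam*(1+chi)*eps" using lam eps_pos chi_range by simp
    ultimately have dd: "(norm (x - xs))\<^sup>2 + eps\<^sup>2/Q \<le> (norm (y - xs))\<^sup>2" using s1 by simp
    have kk: "real (KK (Suc j)) * (eps\<^sup>2/Q) = real (KK j)*(eps\<^sup>2/Q) + eps\<^sup>2/Q"
      using True by (simp add: KK_Suc algebra_simps add_divide_distrib)
    have hh: "HH (Suc j) = HH j" using True by (simp add: HH_Suc)
    have "(norm (yy (Suc j) - xs))\<^sup>2 + real (KK (Suc j)) * (eps\<^sup>2/Q) \<le> d0\<^sup>2"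
      unfolding st kk using dd IH(4) unfolding y_def by linarith
    then show ?thesis using IH(2,3) st xD hh unfolding lam_def by simp
  next
    case False
    have st: "yy (Suc j) = y" "ll (Suc j) = lam/2" unfolding yy_def ll_def st_Suc using False
      by (simp_all add: y_def lam_def yy_def ll_def)
    have "\<not> lam * G \<le> 1 - chi"
    proof
      assume "lam * G \<le> 1 - chi"
      then have "fr x - (fr y + inner (f' y) (x - y)) - (1-chi)*(norm(x-y))\<^sup>2/(2*lam) \<le> (1-chi)*eps/2"
        unfolding x_def by (rule accept_small[OF yD lam])
      then have "acc j" unfolding acc_def acc_iff[OF xD[unfolded x_def y_def lam_def] IH(1)] x_def y_def lam_def .
      then show False using False by simp
    qed
    then have "2*(lam/2)*G > 1 - chi" by simp
    then show ?thesis using IH st False unfolding y_def lam_def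
      by (simp add: KK_Suc HH_Suc)
  qed
qed

end

lemma ln2_ge: "ln (2::real) \<ge> 1/2"
proof -
  have "ln (1/2::real) \<le> 1/2 - 1" by (rule ln_le_minus_one) simp
  then show ?thesis by (simp add: ln_div)
qed

lemma ln_lower: assumes "(rho::real) > 0" shows "ln (1 + rho) \<ge> rho/(1+rho)"
proof -
  have "ln (1/(1+rho)) \<le> 1/(1+rho) - 1" using assms by (intro ln_le_minus_one) simp
  moreover have "1/(1+rho) - 1 = - (rho/(1+rho))" using assms by (simp add: field_simps)
  moreover have "ln (1/(1+rho)) = - ln (1+rho)" using assms by (simp add: ln_div)
  ultimately show ?thesis by simp
qed

lemma log_count:
  fixes a b c rho :: real and K :: nat
  assumes c: "c > 0" and rho: "rho > 0" and a: "a \<ge> 0" and b: "b \<ge> 0"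
    and pot: "(a + c) * (1+rho)^K \<le> b + c"
  shows "real K \<le> (1 + 1/rho) * ln (1 + b/c)"
proof -
  have "c * (1+rho)^K \<le> (a + c) * (1+rho)^K" using a rho by (intro mult_right_mono) auto
  then have "c * (1+rho)^K \<le> b + c" using pot by simp
  then have pw: "(1+rho)^K \<le> 1 + b/c" using c by (simp add: field_simps)
  have bc: "0 < 1 + b/c" using b c by (simp add: add_pos_nonneg)
  have "ln ((1+rho)^K) \<le> ln (1 + b/c)" using pw rho bc by (subst ln_le_cancel_iff) auto
  then have kl: "real K * ln (1+rho) \<le> ln (1 + b/c)" using rho by (simp add: ln_realpow)
  have l1: "ln (1+rho) \<ge> rho/(1+rho)" by (rule ln_lower[OF rho])
  have lp: "ln (1+rho) > 0" using rho by simp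
  have L0: "ln (1 + b/c) \<ge> 0" using b c by simp
  have "real K \<le> ln (1 + b/c) / ln (1+rho)" using kl lp by (simp add: le_divide_eq)
  also have "\<dots> \<le> ln (1 + b/c) / (rho/(1+rho))"
    using l1 L0 rho by (intro divide_left_mono) auto
  also have "\<dots> = (1 + 1/rho) * ln (1 + b/c)" using rho by (simp add: field_simps)
  finally show ?thesis .
qed

context ucs begin

lemma HH_bound:
  assumes nst: "\<forall>i<j. \<not> stops i"
  shows "real (HH j) \<le> of_int \<lceil>2 * ln (lam0 * Q / eps)\<rceil>"
proof -
  define r where "r = lam0 * Q / eps"
  have r1: "r \<ge> 1" unfolding r_def using Qa lam0 eps_pos by (simp add: field_simps)
  have I: "ll j = lam0 / 2^(HH j)" "HH j = 0 \<or> 2*(ll j)*G > 1-chi" using inv[OF nst] by auto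
  have lnr: "ln r \<ge> 0" using r1 by simp
  have "real (HH j) \<le> 2 * ln r"
  proof (cases "HH j = 0")
    case True then show ?thesis using lnr by simp
  next
    case False
    then have g: "2*(lam0 / 2^(HH j))*G > 1-chi" using I by simp
    have pw: "(2::real)^(HH j) > 0" by simp
    have "(1-chi) * 2^(HH j) < 2*lam0*G"
      using g pw by (simp add: field_simps)
    then have p1: "2^(HH j) < 2*lam0*G/(1-chi)" using chi1 by (simp add: pos_less_divide_eq mult.commute)
    have "2*G*eps/(1-chi) \<le> Q" using Qb lam0 eps_pos by (smt (verit) divide_pos_pos)
    then have "2*G/(1-chi) \<le> Q/eps" using eps_pos by (simp add: field_simps)
    then have "lam0*(2*G/(1-chi)) \<le> lam0*(Q/eps)" using lam0 by (intro mult_left_mono) auto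
    then have i: "lam0*(2*G)/(1-chi) \<le> lam0*Q/eps" by (simp only: times_divide_eq_right)
    have e: "lam0*(2*G) = 2*lam0*G" by simp
    from i have "2*lam0*G/(1-chi) \<le> r" unfolding r_def e .
    then have "(2::real)^(HH j) < r" using p1 by simp
    then have "ln ((2::real)^(HH j)) < ln r" using pw r1 by (subst ln_less_cancel_iff) auto
    then have "real (HH j) * ln 2 < ln r" by (simp add: ln_realpow)
    moreover have "real (HH j) * (1/2) \<le> real (HH j) * ln 2" using ln2_ge by (intro mult_left_mono) auto
    ultimately show ?thesis by simp
  qed
  also have "\<dots> \<le> of_int \<lceil>2 * ln r\<rceil>" by (rule le_of_int_ceiling)
  finally show ?thesis unfolding r_def .
qed

lemma KK_bound:
  assumes nst: "\<forall>i<j. \<not> stops i"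
  shows "real (KK j) \<le> d0\<^sup>2 * Q / eps\<^sup>2"
proof -
  have "(norm (yy j - xs))\<^sup>2 + real (KK j) * (eps\<^sup>2/Q) \<le> d0\<^sup>2" using inv[OF nst] by auto
  then have "real (KK j) * (eps\<^sup>2/Q) \<le> d0\<^sup>2" by (smt (verit) zero_le_power2)
  then show ?thesis using Qpos eps_pos by (simp add: field_simps)
qed

lemma potential:
  assumes nst: "\<forall>i<j. \<not> stops i" and c: "c > 0" and rho: "rho \<ge> 0"
    and stp: "\<And>y lam. y \<in> D \<Longrightarrow> lam > 0 \<Longrightarrow> eps \<le> Q*lam \<Longrightarrow>
      fr (prox y lam) - (fr y + inner (f' y) (prox y lam - y)) - (1-chi)*(norm(prox y lam - y))\<^sup>2/(2*lam) \<le> (1-chi)*eps/2 \<Longrightarrow>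
      fr (prox y lam) + hr (prox y lam) - pstar > eps \<Longrightarrow>
      ((norm (prox y lam - xs))\<^sup>2 + c)*(1+rho) \<le> (norm (y - xs))\<^sup>2 + c"
  shows "((norm (yy j - xs))\<^sup>2 + c) * (1+rho)^(KK j) \<le> d0\<^sup>2 + c"
  using nst
proof (induction j)
  case 0 then show ?case by (simp add: st0 KK0 d0_def)
next
  case (Suc j)
  then have IH: "((norm (yy j - xs))\<^sup>2 + c) * (1+rho)^(KK j) \<le> d0\<^sup>2 + c" by auto
  have nstj: "\<forall>i<j. \<not> stops i" using Suc.prems by auto
  have I: "yy j \<in> D" "ll j = lam0 / 2^(HH j)" "HH j = 0 \<or> 2*(ll j)*G > 1-chi" using inv[OF nstj] by auto
  have ns: "\<not> stops j" using Suc.prems by auto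
  define y where "y = yy j"
  define lam where "lam = ll j"
  define x where "x = prox y lam"
  have lam: "lam > 0" unfolding lam_def I(2) using lam0 by simp
  have yD: "y \<in> D" using I(1) unfolding y_def .
  have xD: "x \<in> D" unfolding x_def by (rule prox_min[OF yD lam])
  have lamc: "lam = lam0 \<or> 2*lam*G > 1 - chi" using I(2,3) unfolding lam_def by auto
  have lb: "eps \<le> Q*lam" by (rule lam_lb[OF lam lamc])
  have nst2: "fr x + hr x - pstar > eps"
    using ns unfolding stops_iff stop_iff[OF xD[unfolded x_def y_def lam_def]] x_def y_def lam_def by simp
  show ?case
  proof (cases "acc j")
    case True
    have st: "yy (Suc j) = x" unfolding yy_def st_Suc using True
      by (simp add: x_def y_def lam_def yy_def ll_def)
    have accr: "fr x - (fr y + inner (f' y) (x - y)) - (1-chi)*(norm(x-y))\<^sup>2/(2*lam) \<le> (1-chi)*eps/2"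
      using True unfolding acc_def acc_iff[OF xD[unfolded x_def y_def lam_def] I(1)] x_def y_def lam_def .
    have s: "((norm (x - xs))\<^sup>2 + c)*(1+rho) \<le> (norm (y - xs))\<^sup>2 + c"
      unfolding x_def by (rule stp[OF yD lam lb]) (use accr nst2 in \<open>auto simp: x_def\<close>)
    have "((norm (yy (Suc j) - xs))\<^sup>2 + c) * (1+rho)^(KK (Suc j)) = (((norm (x - xs))\<^sup>2 + c)*(1+rho)) * (1+rho)^(KK j)"
      unfolding st using True by (simp add: KK_Suc algebra_simps)
    also have "\<dots> \<le> ((norm (y - xs))\<^sup>2 + c) * (1+rho)^(KK j)" using s rho by (intro mult_right_mono) auto
    also have "\<dots> \<le> d0\<^sup>2 + c" using IH unfolding y_def .
    finally show ?thesis .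
  next
    case False
    have st: "yy (Suc j) = yy j" unfolding yy_def st_Suc using False by (simp add: yy_def)
    then show ?thesis using IH False by (simp add: KK_Suc)
  qed
qed

lemma boundA1:
  assumes nst: "\<forall>i<j. \<not> stops i" and mu: "mu > 0" "sc_ineq (\<lambda>x. f x + h x) mu" and chi: "chi > 0"
  shows "real (KK j) \<le> (1/chi) * (1 + Q/(mu*eps)) * ln (1 + mu*d0\<^sup>2/eps)"
proof -
  define c where "c = eps/mu"
  define rho where "rho = chi*mu*eps/Q"
  have c: "c > 0" unfolding c_def using eps_pos mu by simp
  have rho: "rho > 0" unfolding rho_def using chi mu eps_pos Qpos by simp
  have pot: "((norm (yy j - xs))\<^sup>2 + c) * (1+rho)^(KK j) \<le> d0\<^sup>2 + c"
  proof (rule potential[OF nst c less_imp_le[OF rho]])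
    fix y lam assume y: "y \<in> D" and lam: "lam > 0" and lb: "eps \<le> Q*lam"
      and acc: "fr (prox y lam) - (fr y + inner (f' y) (prox y lam - y)) - (1-chi)*(norm(prox y lam - y))\<^sup>2/(2*lam) \<le> (1-chi)*eps/2"
      and ns: "fr (prox y lam) + hr (prox y lam) - pstar > eps"
    have s2: "(1 + chi*lam*mu)*(norm (prox y lam - xs))\<^sup>2 + lam*eps \<le> (norm (y - xs))\<^sup>2"
      by (rule step2[OF y lam less_imp_le[OF mu(1)] mu(2) acc ns])
    define d where "d = (norm (prox y lam - xs))\<^sup>2"
    have d0': "d \<ge> 0" unfolding d_def by simp
    have el: "eps/Q \<le> lam" using lb Qpos by (simp add: divide_le_eq mult.commute)
    have r1: "rho \<le> chi*mu*lam" unfolding rho_def using el chi mu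
      by (metis (no_types, opaque_lifting) less_imp_le mult_left_mono mult_nonneg_nonneg times_divide_eq_right)
    have "rho * d \<le> chi*mu*lam * d" using r1 d0' by (rule mult_right_mono)
    moreover have "rho * c = chi * (eps/Q) * eps" unfolding rho_def c_def using mu by (simp add: field_simps)
    moreover have "chi * (eps/Q) * eps \<le> 1 * lam * eps"
      using el chi_range eps_pos Qpos by (intro mult_right_mono mult_mono) auto
    ultimately have "(d + c)*(1+rho) \<le> d + chi*lam*mu*d + lam*eps + c" by (simp add: algebra_simps)
    also have "\<dots> \<le> (norm (y - xs))\<^sup>2 + c" using s2 unfolding d_def by (simp add: algebra_simps)
    finally show "((norm (prox y lam - xs))\<^sup>2 + c)*(1+rho) \<le> (norm (y - xs))\<^sup>2 + c" unfolding d_def .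
  qed
  have "real (KK j) \<le> (1 + 1/rho) * ln (1 + d0\<^sup>2/c)"
    by (rule log_count[OF c rho _ _ pot]) auto
  also have "d0\<^sup>2/c = mu*d0\<^sup>2/eps" unfolding c_def by simp
  also have "1 + 1/rho \<le> (1/chi) * (1 + Q/(mu*eps))"
  proof -
    have "1/rho = (1/chi) * (Q/(mu*eps))" unfolding rho_def by simp
    moreover have "1 \<le> 1/chi" using chi chi_range by simp
    ultimately show ?thesis by (simp add: distrib_left)
  qed
  then have "(1 + 1/rho) * ln (1 + mu*d0\<^sup>2/eps) \<le> (1/chi) * (1 + Q/(mu*eps)) * ln (1 + mu*d0\<^sup>2/eps)"
    using mu eps_pos by (intro mult_right_mono) auto
  finally show ?thesis .
qed

lemma boundA2:
  assumes nst: "\<forall>i<j. \<not> stops i" and mu: "mu > 0" and nu: "nu > 0" "nu \<le> mu" "sc_ineq h nu"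
  shows "real (KK j) \<le> (1 + Q/(nu*eps)) * ln (1 + mu*d0\<^sup>2/eps)"
proof -
  define c where "c = eps/mu"
  define rho where "rho = nu*eps/Q"
  have c: "c > 0" unfolding c_def using eps_pos mu by simp
  have rho: "rho > 0" unfolding rho_def using nu eps_pos Qpos by simp
  have pot: "((norm (yy j - xs))\<^sup>2 + c) * (1+rho)^(KK j) \<le> d0\<^sup>2 + c"
  proof (rule potential[OF nst c less_imp_le[OF rho]])
    fix y lam assume y: "y \<in> D" and lam: "lam > 0" and lb: "eps \<le> Q*lam"
      and acc: "fr (prox y lam) - (fr y + inner (f' y) (prox y lam - y)) - (1-chi)*(norm(prox y lam - y))\<^sup>2/(2*lam) \<le> (1-chi)*eps/2"
      and ns: "fr (prox y lam) + hr (prox y lam) - pstar > eps"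
    have s1: "(1 + lam*nu)*(norm (prox y lam - xs))\<^sup>2 + lam*(1+chi)*eps \<le> (norm (y - xs))\<^sup>2"
      by (rule step1[OF y lam less_imp_le[OF nu(1)] nu(3) acc ns])
    define d where "d = (norm (prox y lam - xs))\<^sup>2"
    have d0': "d \<ge> 0" unfolding d_def by simp
    have el: "eps/Q \<le> lam" using lb Qpos by (simp add: divide_le_eq mult.commute)
    have r1: "rho \<le> nu*lam" unfolding rho_def using el nu
      by (metis (no_types, opaque_lifting) less_imp_le mult_left_mono times_divide_eq_right)
    have "rho * d \<le> nu*lam * d" using r1 d0' by (rule mult_right_mono)
    moreover have "rho * c = (nu/mu) * (eps/Q) * eps" unfolding rho_def c_def using mu by (simp add: field_simps)
    moreover have "(nu/mu) * (eps/Q) * eps \<le> 1 * lam * eps"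
      using el nu mu eps_pos Qpos by (intro mult_right_mono mult_mono) auto
    moreover have "lam*eps \<le> lam*(1+chi)*eps" using lam eps_pos chi_range by simp
    ultimately have "(d + c)*(1+rho) \<le> d + lam*nu*d + lam*(1+chi)*eps + c" by (simp add: algebra_simps)
    also have "\<dots> \<le> (norm (y - xs))\<^sup>2 + c" using s1 unfolding d_def by (simp add: algebra_simps)
    finally show "((norm (prox y lam - xs))\<^sup>2 + c)*(1+rho) \<le> (norm (y - xs))\<^sup>2 + c" unfolding d_def .
  qed
  have "real (KK j) \<le> (1 + 1/rho) * ln (1 + d0\<^sup>2/c)"
    by (rule log_count[OF c rho _ _ pot]) auto
  also have "d0\<^sup>2/c = mu*d0\<^sup>2/eps" unfolding c_def by simp
  also have "1/rho = Q/(nu*eps)" unfolding rho_def by simp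
  finally show ?thesis .
qed

end

lemma min_mult_ereal:
  fixes a b L :: ereal
  assumes "L \<ge> 0"
  shows "min a b * L = min (a*L) (b*L)"
proof (cases "a \<le> b")
  case True
  then have "a*L \<le> b*L" using assms by (rule ereal_mult_right_mono)
  then show ?thesis using True by (simp add: min_def)
next
  case False
  then have "b*L \<le> a*L" using assms by (intro ereal_mult_right_mono) auto
  then show ?thesis using False by (simp add: min_def)
qed

lemma convex_of_sc0:
  fixes \<psi> :: "'a::real_inner \<Rightarrow> ereal"
  assumes "\<And>x. \<psi> x \<noteq> -\<infinity>" "sc_ineq \<psi> 0" shows "convex_fun \<psi>"
  using convex_of_sc[OF assms] by (simp add: zero_ereal_def[symmetric])

context ucs begin

lemma phi_convex: "convex_fun (\<lambda>x. f x + h x)"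
  by (rule convex_of_sc0[OF phi_ninf sc_add[OF convex_sc0[OF fn f_convex] convex_sc0[OF hn h_convex] fn hn]])

lemma main:
  "\<exists>j. ucs_stops_at f f' h chi eps x0 lam0 j \<and>
           ereal (real j) \<le> ucs_bound Mf Lf chi lam0 eps
              (sc_modulus (\<lambda>x. f x + h x)) (sc_modulus h)
              (infdist x0 {x. \<forall>y. f x + h x \<le> f y + h y})"
proof -
  have d0eq: "infdist x0 {x. \<forall>y. f x + h x \<le> f y + h y} = d0"
    using xs(2) unfolding Xs_def d0_def dist_norm .
  define C where "C = real_of_int \<lceil>2 * ln (lam0 * Q / eps)\<rceil>"
  define B2 where "B2 = d0\<^sup>2 * Q / eps\<^sup>2"
  have cnt: "real j \<le> real (KK j) + C \<and> real (KK j) \<le> B2" if nb: "\<forall>i<j. \<not> stops i" for j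
  proof -
    have "real j = real (KK j) + real (HH j)" using KH[of j] by (metis of_nat_add)
    then show ?thesis using HH_bound[OF nb] KK_bound[OF nb] unfolding C_def B2_def by simp
  qed
  have ex: "\<exists>j. stops j"
  proof (rule ccontr)
    assume "\<not> (\<exists>j. stops j)"
    then have nb: "\<forall>i<j. \<not> stops i" for j by auto
    define N where "N = nat \<lceil>B2 + C\<rceil> + 1"
    have "real N \<le> B2 + C" using cnt[OF nb, of N] by simp
    moreover have "B2 + C < real N" unfolding N_def by linarith
    ultimately show False by simp
  qed
  define j where "j = (LEAST j. stops j)"
  have sj: "stops j" unfolding j_def using ex by (rule LeastI_ex)
  have nb: "\<forall>i<j. \<not> stops i" unfolding j_def using not_less_Least by blast
  have jb: "real j \<le> real (KK j) + C" and KB: "real (KK j) \<le> B2" using cnt[OF nb] by auto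
  define mu where "mu = sc_modulus (\<lambda>x. f x + h x)"
  define nu where "nu = sc_modulus h"
  have nu0: "0 \<le> nu" unfolding nu_def by (rule scmod_ge0[OF h_convex])
  have numu: "nu \<le> mu" unfolding nu_def mu_def by (rule scmod_mono[OF f_convex fn hn])
  have mu0: "0 \<le> mu" using nu0 numu by simp
  define A1 where "A1 = (if chi = 0 then \<infinity> else ereal (1 / chi)) * (1 + ereal Q / (mu * ereal eps))"
  define A2 where "A2 = 1 + ereal Q / (nu * ereal eps)"
  define T1 where "T1 = (if mu = 0 then \<infinity> else min A1 A2 * eln (1 + mu * ereal (d0\<^sup>2 / eps)))"
  have KT1: "ereal (real (KK j)) \<le> T1"
  proof (cases "d0 = 0")
    case True
    then have "real (KK j) \<le> 0" using KB unfolding B2_def by simp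
    then have K0: "real (KK j) = 0" by simp
    have "0 \<le> T1" unfolding T1_def True by (simp add: eln_def zero_ereal_def[symmetric])
    then show ?thesis using K0 by (simp add: zero_ereal_def)
  next
    case False
    then have d0p: "d0 > 0" unfolding d0_def by simp
    show ?thesis
    proof (cases "mu = 0")
      case True then show ?thesis unfolding T1_def by simp
    next
      case mun0: False
      have "mu \<noteq> \<infinity>"
      proof
        assume "mu = \<infinity>"
        then have "x0 = xs" using scmod_inf_single[of "\<lambda>x. f x + h x", OF _ phi_convex _ phiD[OF x0_dom] phiD[OF xsD]] phi_ninf
          unfolding mu_def by blast
        then show False using d0p unfolding d0_def by simp
      qed
      then obtain m where m: "mu = ereal m" "m > 0" using mu0 mun0 by (cases mu) auto
      have scm: "sc_ineq (\<lambda>x. f x + h x) m" using scmod_attain[of "\<lambda>x. f x + h x" m] phi_ninf m(1) unfolding mu_def by blast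
      obtain n where n: "nu = ereal n" "0 \<le> n" "n \<le> m" using nu0 numu m by (cases nu) auto
      have scn: "sc_ineq h n" using scmod_attain[of h n] hn n(1) unfolding nu_def by blast
      define L where "L = ln (1 + m * d0\<^sup>2 / eps)"
      have "m * d0\<^sup>2 / eps > 0" using m d0p eps_pos by simp
      then have Lp: "L > 0" unfolding L_def by (intro ln_gt_zero) simp
      have eL: "eln (1 + mu * ereal (d0\<^sup>2 / eps)) = ereal L" unfolding m L_def eln_def by (simp add: add.commute)
      have k1: "ereal (real (KK j)) \<le> A1 * ereal L"
      proof (cases "chi = 0")
        case True
        have "Q / (m * eps) > 0" using m eps_pos Qpos by simp
        then have "1 + ereal Q / (mu * ereal eps) > 0" using m eps_pos by simp
        then have "A1 = \<infinity>" unfolding A1_def using True by simp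
        then show ?thesis using Lp by simp
      next
        case False
        then have chp: "chi > 0" using chi_range by simp
        have "A1 = ereal ((1/chi) * (1 + Q/(m*eps)))" unfolding A1_def m using False m eps_pos by simp
        moreover have "real (KK j) \<le> (1/chi) * (1 + Q/(m*eps)) * L"
          unfolding L_def by (rule boundA1[OF nb m(2) scm chp])
        ultimately show ?thesis by simp
      qed
      have k2: "ereal (real (KK j)) \<le> A2 * ereal L"
      proof (cases "n = 0")
        case True
        have "A2 = \<infinity>" unfolding A2_def n True using Qpos by simp
        then show ?thesis using Lp by simp
      next
        case False
        then have np: "n > 0" using n by simp
        have "A2 = ereal (1 + Q/(n*eps))" unfolding A2_def n using np eps_pos by simp
        moreover have "real (KK j) \<le> (1 + Q/(n*eps)) * L"
          unfolding L_def by (rule boundA2[OF nb m(2) np n(3) scn])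
        ultimately show ?thesis by simp
      qed
      have "T1 = min (A1 * ereal L) (A2 * ereal L)" unfolding T1_def eL using mun0 Lp
        by (simp add: min_mult_ereal)
      then show ?thesis using k1 k2 by simp
    qed
  qed
  have bnd: "ucs_bound Mf Lf chi lam0 eps mu nu d0 = min T1 (ereal B2) + ereal C"
    unfolding ucs_bound_def Let_def Q_def[symmetric] T1_def A1_def A2_def B2_def C_def ..
  have "ereal (real j) \<le> ereal (real (KK j)) + ereal C" using jb by simp
  also have "\<dots> \<le> min T1 (ereal B2) + ereal C" using KT1 KB by (intro add_right_mono) simp
  finally have "ereal (real j) \<le> ucs_bound Mf Lf chi lam0 eps mu nu d0" unfolding bnd .
  then show ?thesis using sj unfolding stops_def d0eq mu_def nu_def by blast
qed

end

theorem theorem2p2: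
  fixes f h :: "'a::euclidean_space \<Rightarrow> ereal"
    and f' :: "'a \<Rightarrow> 'a"
    and Mf Lf chi lam0 eps :: real
    and x0 :: 'a
  assumes f_proper: "proper_fun f" and f_convex: "convex_fun f" and f_lsc: "lsc_fun f"
    and h_proper: "proper_fun h" and h_convex: "convex_fun h" and h_lsc: "lsc_fun h"
    and dom_sub: "edom h \<subseteq> edom f"
    and subgrad_oracle: "\<And>x. x \<in> edom h \<Longrightarrow> f' x \<in> subdiff f x"
    and Mf_nonneg: "Mf \<ge> 0" and Lf_nonneg: "Lf \<ge> 0"
    and hoelder: "\<And>x y. x \<in> edom h \<Longrightarrow> y \<in> edom h \<Longrightarrow>
                    norm (f' x - f' y) \<le> 2 * Mf + Lf * norm (x - y)"
    and Xstar_ne: "{x. \<forall>y. f x + h x \<le> f y + h y} \<noteq> {}"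
    and x0_dom: "x0 \<in> edom h"
    and chi_range: "0 \<le> chi" "chi < 1"
    and lam0: "lam0 > 0"
    and eps_pos: "eps > 0"
  shows "\<exists>j. ucs_stops_at f f' h chi eps x0 lam0 j \<and>
           ereal (real j) \<le> ucs_bound Mf Lf chi lam0 eps
              (sc_modulus (\<lambda>x. f x + h x)) (sc_modulus h)
              (infdist x0 {x. \<forall>y. f x + h x \<le> f y + h y})"
proof -
  interpret ucs f h f' Mf Lf chi lam0 eps x0
    by unfold_locales (use assms in auto)
  show ?thesis by (rule main)
qed


end
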